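(* Let $G$ be a 2-connected graph on $n\ge 4$ vertices, and let $p$ be the length of a longest path in $G$. Then there is a bond of $G$ meeting every path of $G$ of length at least $p-1$.
   Context: All graphs are finite, simple and undirected. The length of a path is its number of edges. A bond of $G$ is a minimal nonempty edge-cut, where an edge-cut is a set of edges of the form $\{xy\in E(G): x\in X, y\in V(G)\setminus X\}$ for some $X\subseteq V(G)$. A set of edges meets a path if the path contains at least one edge of the set. *)

theory Defs
  imports Main
begin

definition simple_graph :: "'a set \<Rightarrow> 'a set set \<Rightarrow> bool" where
  "simple_graph V E \<longleftrightarrow> finite V \<and> (\<forall>e\<in>E. \<exists>x y. x \<in> V \<and> y \<in> V \<and> x \<noteq> y \<and> e = {x, y})"

definition is_path :: "'a set \<Rightarrow> 'a set set \<Rightarrow> 'a list \<Rightarrow> bool" where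
  "is_path V E P \<longleftrightarrow> P \<noteq> [] \<and> distinct P \<and> set P \<subseteq> V \<and>
     (\<forall>i. Suc i < length P \<longrightarrow> {P ! i, P ! Suc i} \<in> E)"

definition path_length :: "'a list \<Rightarrow> nat" where
  "path_length P = length P - 1"

definition path_edges :: "'a list \<Rightarrow> 'a set set" where
  "path_edges P = {{P ! i, P ! Suc i} | i. Suc i < length P}"

definition connected_graph :: "'a set \<Rightarrow> 'a set set \<Rightarrow> bool" where
  "connected_graph V E \<longleftrightarrow> V \<noteq> {} \<and>
     (\<forall>x\<in>V. \<forall>y\<in>V. \<exists>P. is_path V E P \<and> hd P = x \<and> last P = y)"

definition delete_vertex :: "'a set set \<Rightarrow> 'a \<Rightarrow> 'a set set" where
  "delete_vertex E v = {e \<in> E. v \<notin> e}"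

definition two_connected :: "'a set \<Rightarrow> 'a set set \<Rightarrow> bool" where
  "two_connected V E \<longleftrightarrow> card V > 2 \<and> connected_graph V E \<and>
     (\<forall>v\<in>V. connected_graph (V - {v}) (delete_vertex E v))"

definition edge_cut_of :: "'a set \<Rightarrow> 'a set set \<Rightarrow> 'a set \<Rightarrow> 'a set set" where
  "edge_cut_of V E X = {e \<in> E. \<exists>x y. e = {x, y} \<and> x \<in> X \<and> y \<in> V - X}"

definition is_edge_cut :: "'a set \<Rightarrow> 'a set set \<Rightarrow> 'a set set \<Rightarrow> bool" where
  "is_edge_cut V E F \<longleftrightarrow> (\<exists>X\<subseteq>V. F = edge_cut_of V E X)"

definition is_bond :: "'a set \<Rightarrow> 'a set set \<Rightarrow> 'a set set \<Rightarrow> bool" where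
  "is_bond V E B \<longleftrightarrow> is_edge_cut V E B \<and> B \<noteq> {} \<and>
     (\<forall>F. is_edge_cut V E F \<and> F \<noteq> {} \<and> F \<subseteq> B \<longrightarrow> F = B)"

end

theory Submission
  imports Defs
begin

lemma is_path_succ: "is_path S E P \<longleftrightarrow> P \<noteq> [] \<and> distinct P \<and> set P \<subseteq> S \<and> successively (\<lambda>a b. {a,b} \<in> E) P"
  by (simp add: is_path_def successively_conv_nth)

lemma path_single[simp]: "is_path S E [a] \<longleftrightarrow> a \<in> S"
  by (simp add: is_path_succ)

lemma path_Cons2: "is_path S E (a # b # L) \<longleftrightarrow> a \<in> S \<and> a \<notin> set (b#L) \<and> {a,b} \<in> E \<and> is_path S E (b # L)"
  by (auto simp add: is_path_succ)

lemma path_append: "xs \<noteq> [] \<Longrightarrow> ys \<noteq> [] \<Longrightarrow> is_path S E (xs @ ys) \<longleftrightarrow>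
   is_path S E xs \<and> is_path S E ys \<and> set xs \<inter> set ys = {} \<and> {last xs, hd ys} \<in> E"
  by (auto simp add: is_path_succ successively_append_iff)

lemma path_rev[simp]: "is_path S E (rev P) \<longleftrightarrow> is_path S E P"
  by (simp add: is_path_succ insert_commute)

lemma path_mono: "is_path S E P \<Longrightarrow> S \<subseteq> T \<Longrightarrow> E \<subseteq> F \<Longrightarrow> is_path T F P"
  unfolding is_path_succ by (auto elim: successively_mono)

lemma path_restrict: "is_path S E P \<Longrightarrow> set P \<subseteq> T \<Longrightarrow> is_path T E P"
  unfolding is_path_succ by auto

lemma path_prefix: "is_path S E (xs @ ys) \<Longrightarrow> xs \<noteq> [] \<Longrightarrow> is_path S E xs"
  by (cases "ys = []") (auto simp: path_append)

lemma path_suffix: "is_path S E (xs @ ys) \<Longrightarrow> ys \<noteq> [] \<Longrightarrow> is_path S E ys"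
  by (cases "xs = []") (auto simp: path_append)

lemma path_join: "is_path S E xs \<Longrightarrow> is_path S E ys \<Longrightarrow> set xs \<inter> set ys = {} \<Longrightarrow> {last xs, hd ys} \<in> E
   \<Longrightarrow> is_path S E (xs @ ys)"
  by (subst path_append) (auto simp: is_path_def)

lemma path_ne: "is_path S E P \<Longrightarrow> P \<noteq> []" by (simp add: is_path_def)
lemma path_distinct: "is_path S E P \<Longrightarrow> distinct P" by (simp add: is_path_def)
lemma path_set: "is_path S E P \<Longrightarrow> set P \<subseteq> S" by (simp add: is_path_def)

definition reach :: "'a set \<Rightarrow> 'a set set \<Rightarrow> 'a \<Rightarrow> 'a \<Rightarrow> bool" where
  "reach S E a b \<longleftrightarrow> (\<exists>P. is_path S E P \<and> hd P = a \<and> last P = b)"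

lemma reach_refl: "a \<in> S \<Longrightarrow> reach S E a a"
  unfolding reach_def by (rule exI[of _ "[a]"]) simp

lemma reach_sym: "reach S E a b \<Longrightarrow> reach S E b a"
  unfolding reach_def
  by (metis path_rev path_ne hd_rev last_rev)

lemma reach_mem: "reach S E a b \<Longrightarrow> a \<in> S \<and> b \<in> S"
  unfolding reach_def by (metis hd_in_set last_in_set path_ne path_set subsetD)

lemma reach_mono: "reach S E a b \<Longrightarrow> S \<subseteq> T \<Longrightarrow> reach T E a b"
  unfolding reach_def using path_mono[OF _ _ order_refl] by metis

lemma reach_step: assumes "reach S E a b" "{b,c} \<in> E" "c \<in> S" shows "reach S E a c"
proof -
  obtain P where P: "is_path S E P" "hd P = a" "last P = b" using assms(1) reach_def by metis
  show ?thesis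
  proof (cases "c \<in> set P")
    case True
    then obtain P1 P2 where sp: "P = P1 @ c # P2" by (meson split_list)
    have "is_path S E (P1 @ [c])" using P(1) sp path_prefix[of S E "P1 @ [c]" P2] by simp
    moreover have "hd (P1 @ [c]) = a" using P(2) sp by (cases P1) auto
    ultimately show ?thesis unfolding reach_def by (metis last_snoc)
  next
    case False
    have "is_path S E (P @ [c])"
      using P False assms(2,3) by (intro path_join) auto
    moreover have "hd (P @ [c]) = a" using P path_ne[OF P(1)] by (simp add: hd_append)
    ultimately show ?thesis unfolding reach_def by (metis last_snoc)
  qed
qed

lemma reach_along: "is_path S E Q \<Longrightarrow> reach S E a (hd Q) \<Longrightarrow> reach S E a (last Q)"
proof (induction Q)
  case Nil then show ?case by (simp add: is_path_def)
next
  case (Cons x Q)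
  show ?case
  proof (cases Q)
    case Nil then show ?thesis using Cons by simp
  next
    case (Cons y Q')
    have "is_path S E Q" "{x, y} \<in> E" "y \<in> S" using Cons.prems(1) \<open>Q = y # Q'\<close>
      by (auto simp: path_Cons2 is_path_def)
    then have "reach S E a (hd Q)" using reach_step Cons.prems(2) \<open>Q = y # Q'\<close> by fastforce
    then show ?thesis using Cons.IH \<open>is_path S E Q\<close> \<open>Q = y # Q'\<close> by simp
  qed
qed

lemma reach_trans: "reach S E a b \<Longrightarrow> reach S E b c \<Longrightarrow> reach S E a c"
  by (metis reach_along reach_def)

lemma conn_def2: "connected_graph S E \<longleftrightarrow> S \<noteq> {} \<and> (\<forall>a\<in>S. \<forall>b\<in>S. reach S E a b)"
  unfolding connected_graph_def reach_def by blast

lemma conn_insert: assumes "connected_graph Y E" "y \<in> Y" "{x,y} \<in> E"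
  shows "connected_graph (insert x Y) E"
proof -
  have r: "reach (insert x Y) E a b" if "a \<in> Y" "b \<in> Y" for a b
  proof -
    have "reach Y E a b" using assms(1) that by (simp add: conn_def2)
    then show ?thesis by (rule reach_mono) auto
  qed
  have rx: "reach (insert x Y) E a x" if "a \<in> Y" for a
  proof -
    have "{y, x} \<in> E" using assms(3) by (simp add: insert_commute)
    then show ?thesis using r[OF that assms(2)] reach_step[of "insert x Y" E a y x] by simp
  qed
  have "reach (insert x Y) E a b" if "a \<in> insert x Y" "b \<in> insert x Y" for a b
  proof (cases "a = x")
    case True
    then show ?thesis
    proof (cases "b = x")
      case True then show ?thesis using \<open>a = x\<close> by (simp add: reach_refl)
    next
      case False then have "b \<in> Y" using that by auto
      then show ?thesis using \<open>a = x\<close> rx reach_sym by metis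
    qed
  next
    case False
    then show ?thesis using that r rx by auto
  qed
  then show ?thesis unfolding conn_def2 by blast
qed

lemma crossing: "(\<exists>a\<in>set P. a \<in> A) \<Longrightarrow> (\<exists>b\<in>set P. b \<notin> A) \<Longrightarrow>
   \<exists>i. Suc i < length P \<and> (P!i \<in> A \<longleftrightarrow> P!Suc i \<notin> A)"
proof (induction P)
  case Nil then show ?case by simp
next
  case (Cons x P)
  show ?case
  proof (cases "(\<exists>a\<in>set P. a \<in> A) \<and> (\<exists>b\<in>set P. b \<notin> A)")
    case True
    then obtain i where "Suc i < length P" "P!i \<in> A \<longleftrightarrow> P!Suc i \<notin> A" using Cons.IH by blast
    then show ?thesis by (intro exI[of _ "Suc i"]) auto
  next
    case False
    then have "P \<noteq> []" using Cons.prems by auto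
    then have "(x \<in> A \<longleftrightarrow> hd P \<notin> A)" using False Cons.prems by (cases P) auto
    then show ?thesis using \<open>P \<noteq> []\<close> by (intro exI[of _ 0]) (cases P, auto)
  qed
qed

lemma first_hit: "is_path S E P \<Longrightarrow> \<exists>v\<in>set P. v \<in> B \<Longrightarrow>
  \<exists>W. is_path S E W \<and> hd W = hd P \<and> last W \<in> B \<and> set W \<inter> B = {last W} \<and> set W \<subseteq> set P"
proof (induction P)
  case Nil then show ?case by simp
next
  case (Cons x P)
  show ?case
  proof (cases "x \<in> B")
    case True
    then show ?thesis using Cons.prems by (intro exI[of _ "[x]"]) (auto simp: is_path_def)
  next
    case False
    then have Pne: "P \<noteq> []" using Cons.prems by auto
    then have pP: "is_path S E P" and e: "{x, hd P} \<in> E" and xn: "x \<notin> set P" and xS: "x \<in> S"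
      using Cons.prems(1) by (cases P; auto simp: path_Cons2)+
    obtain W where W: "is_path S E W" "hd W = hd P" "last W \<in> B" "set W \<inter> B = {last W}" "set W \<subseteq> set P"
      using Cons.IH[OF pP] Cons.prems False by auto
    have "is_path S E ([x] @ W)"
      using W xn xS e by (intro path_join) auto
    then show ?thesis using W False path_ne[OF W(1)] by (intro exI[of _ "x # W"]) auto
  qed
qed

lemma last_hit: "is_path S E P \<Longrightarrow> \<exists>v\<in>set P. v \<in> A \<Longrightarrow>
  \<exists>W. is_path S E W \<and> last W = last P \<and> hd W \<in> A \<and> set W \<inter> A = {hd W} \<and> set W \<subseteq> set P"
proof -
  assume a: "is_path S E P" "\<exists>v\<in>set P. v \<in> A"
  obtain W where W: "is_path S E W" "hd W = hd (rev P)" "last W \<in> A" "set W \<inter> A = {last W}" "set W \<subseteq> set (rev P)"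
    using first_hit[of S E "rev P" A] a by auto
  have "W \<noteq> []" "P \<noteq> []" using W(1) a(1) path_ne by auto
  then show ?thesis using W by (intro exI[of _ "rev W"]) (auto simp: hd_rev last_rev)
qed

lemma connector: assumes "connected_graph S E" "A \<subseteq> S" "B \<subseteq> S" "A \<noteq> {}" "B \<noteq> {}" "A \<inter> B = {}"
  shows "\<exists>W. is_path S E W \<and> hd W \<in> A \<and> last W \<in> B \<and> set W \<inter> A = {hd W} \<and> set W \<inter> B = {last W}"
proof -
  obtain a b where ab: "a \<in> A" "b \<in> B" using assms by blast
  then obtain P where P: "is_path S E P" "hd P = a" "last P = b"
    using assms unfolding connected_graph_def by blast
  have "a \<in> set P" using P path_ne hd_in_set by metis
  then obtain W1 where W1: "is_path S E W1" "last W1 = b" "hd W1 \<in> A" "set W1 \<inter> A = {hd W1}" "set W1 \<subseteq> set P"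
    using last_hit[OF P(1), of A] ab P(3) by auto
  have "b \<in> set W1" using W1 path_ne last_in_set by metis
  then obtain W where W: "is_path S E W" "hd W = hd W1" "last W \<in> B" "set W \<inter> B = {last W}" "set W \<subseteq> set W1"
    using first_hit[OF W1(1), of B] ab by auto
  have "hd W \<in> set W" using W path_ne hd_in_set by metis
  then have "set W \<inter> A = {hd W}" using W W1 by auto
  then show ?thesis using W W1 by (intro exI[of _ W]) simp
qed

lemma tc_conn: "two_connected V E \<Longrightarrow> connected_graph V E"
  by (simp add: two_connected_def)

lemma tc_del: assumes "two_connected V E" "v \<in> V" shows "connected_graph (V - {v}) E"
proof -
  have c: "connected_graph (V - {v}) (delete_vertex E v)" using assms by (simp add: two_connected_def)
  have "delete_vertex E v \<subseteq> E" by (auto simp: delete_vertex_def)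
  then show ?thesis using c unfolding connected_graph_def by (meson order_refl path_mono)
qed

lemma int1D: "A \<inter> B = {c} \<Longrightarrow> x \<in> A \<Longrightarrow> x \<in> B \<Longrightarrow> x = c"
  by blast

lemma path_glue: assumes "is_path S E (A @ W)" "is_path S E (W @ B)" "W \<noteq> []" "set A \<inter> set B = {}"
  shows "is_path S E (A @ W @ B)"
  using assms unfolding is_path_succ
  by (auto simp: successively_append_iff)

lemma path_adjL: "is_path S E (R1 @ v # R2) \<Longrightarrow> R1 \<noteq> [] \<Longrightarrow> {last R1, v} \<in> E"
  using path_append[of R1 "v # R2" S E] by simp

lemma attach_front1: assumes "is_path S E (R1 @ v # R2)" "is_path S E W" "hd W = v" "set W \<inter> set (R1 @ v # R2) = {v}"
  shows "is_path S E (R1 @ W)"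
proof (cases "R1 = []")
  case True then show ?thesis using assms by simp
next
  case False
  have d: "v \<notin> set R1" using path_distinct[OF assms(1)] by simp
  show ?thesis
  proof (rule path_join)
    show "is_path S E R1" using path_prefix[of S E R1 "v # R2"] assms(1) False by simp
    show "is_path S E W" by fact
    show "set R1 \<inter> set W = {}" using assms(4) d by auto
    show "{last R1, hd W} \<in> E" using path_adjL[OF assms(1) False] assms(3) by simp
  qed
qed

lemma attach_front: assumes "is_path S E (R1 @ v # R2)" "is_path S E W" "hd W = v" "set W \<inter> set (R1 @ v # R2) = {v}"
  shows "is_path S E (R1 @ W)" "is_path S E (rev R2 @ W)"
proof -
  show "is_path S E (R1 @ W)" by (rule attach_front1[OF assms])
  have "is_path S E (rev R2 @ v # rev R1)" using assms(1) path_rev[of S E "R1 @ v # R2"] by simp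
  moreover have "set W \<inter> set (rev R2 @ v # rev R1) = {v}" using assms(4) by auto
  ultimately show "is_path S E (rev R2 @ W)" using attach_front1 assms(2,3) by metis
qed

lemma attach_back: assumes "is_path S E (Q1 @ v # Q2)" "is_path S E W" "last W = v" "set W \<inter> set (Q1 @ v # Q2) = {v}"
  shows "is_path S E (W @ Q2)" "is_path S E (W @ rev Q1)"
proof -
  have W: "W \<noteq> []" using assms(2) path_ne by auto
  have a1: "is_path S E (rev Q2 @ v # rev Q1)" using assms(1) path_rev[of S E "Q1 @ v # Q2"] by simp
  have a2: "is_path S E (rev W)" "hd (rev W) = v" using assms(2,3) W by (auto simp: hd_rev)
  have a3: "set (rev W) \<inter> set (rev Q2 @ v # rev Q1) = {v}" using assms(4) by auto
  have "is_path S E (rev Q2 @ rev W)" "is_path S E (rev (rev Q1) @ rev W)"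
    using attach_front[OF a1 a2 a3] by auto
  then show "is_path S E (W @ Q2)" "is_path S E (W @ rev Q1)"
    by (metis path_rev rev_append rev_rev_ident)+
qed

lemma route_paths:
  assumes R: "is_path S E (R1 @ a # R2)" and Q: "is_path S E (Q1 @ b # Q2)"
    and disj: "set (R1 @ a # R2) \<inter> set (Q1 @ b # Q2) = {}"
    and W: "is_path S E W" "hd W = a" "last W = b" "set W \<inter> set (R1 @ a # R2) = {a}"
       "set W \<inter> set (Q1 @ b # Q2) = {b}"
  shows "is_path S E (R1 @ W @ Q2)" "is_path S E (R1 @ W @ rev Q1)"
        "is_path S E (rev R2 @ W @ Q2)" "is_path S E (rev R2 @ W @ rev Q1)"
proof -
  note f = attach_front[OF R W(1,2,4)] and b = attach_back[OF Q W(1,3,5)]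
  have Wne: "W \<noteq> []" using W(1) path_ne by auto
  show "is_path S E (R1 @ W @ Q2)" using f b disj Wne by (intro path_glue) auto
  show "is_path S E (R1 @ W @ rev Q1)" using f b disj Wne by (intro path_glue) auto
  show "is_path S E (rev R2 @ W @ Q2)" using f b disj Wne by (intro path_glue) auto
  show "is_path S E (rev R2 @ W @ rev Q1)" using f b disj Wne by (intro path_glue) auto
qed

lemma route_bound:
  assumes bnd: "\<forall>P. is_path V E P \<longrightarrow> path_length P \<le> p"
    and R: "is_path V E (R1 @ a # R2)" and Q: "is_path V E (Q1 @ b # Q2)"
    and disj: "set (R1 @ a # R2) \<inter> set (Q1 @ b # Q2) = {}"
    and W: "is_path V E W" "hd W = a" "last W = b" "set W \<inter> set (R1 @ a # R2) = {a}"
       "set W \<inter> set (Q1 @ b # Q2) = {b}"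
  shows "length R1 + length Q1 + 1 \<le> p \<and> length R1 + length Q2 + 1 \<le> p \<and>
         length R2 + length Q1 + 1 \<le> p \<and> length R2 + length Q2 + 1 \<le> p"
proof -
  have "a \<noteq> b" using disj by auto
  then have lw: "length W \<ge> 2"
    using W(2,3) path_ne[OF W(1)] by (cases W; cases "tl W"; auto)
  note ps = route_paths[OF R Q disj W]
  have "path_length (R1 @ W @ Q2) \<le> p" "path_length (R1 @ W @ rev Q1) \<le> p"
       "path_length (rev R2 @ W @ Q2) \<le> p" "path_length (rev R2 @ W @ rev Q1) \<le> p"
    using ps bnd by auto
  then show ?thesis using lw by (simp add: path_length_def; linarith)
qed


lemma lemmaA:
  assumes bnd: "\<forall>P. is_path V E P \<longrightarrow> path_length P \<le> p"
    and conn: "connected_graph V E" and conn1: "\<forall>v\<in>V. connected_graph (V - {v}) E"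
    and p2: "p \<ge> 2"
    and R: "is_path V E R" "path_length R \<ge> p - 1"
    and Q: "is_path V E Q" "path_length Q \<ge> p - 1"
    and disj: "set R \<inter> set Q = {}"
  shows False
proof -
  have RV: "set R \<subseteq> V" and QV: "set Q \<subseteq> V" using R Q path_set by auto
  have lR: "length R \<ge> p" and lQ: "length Q \<ge> p" using R(2) Q(2) p2 by (auto simp: path_length_def)
  have Rne: "set R \<noteq> {}" and Qne: "set Q \<noteq> {}" using lR lQ p2 by auto
  obtain W1 where W1: "is_path V E W1" "hd W1 \<in> set R" "last W1 \<in> set Q"
      "set W1 \<inter> set R = {hd W1}" "set W1 \<inter> set Q = {last W1}"
    using connector[OF conn RV QV Rne Qne disj] by blast
  define a where "a = hd W1"
  have aR: "a \<in> set R" using W1 a_def by simp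
  have aV: "a \<in> V" using aR RV by auto
  have aQ: "a \<notin> set Q" using aR disj by auto
  have W1V: "set W1 \<subseteq> V" using W1(1) path_set by auto
  have W1ne: "W1 \<noteq> []" using W1(1) path_ne by auto
  define A' where "A' = set R - {a}"
  define B' where "B' = (set Q \<union> set W1) - {a}"
  have "length R \<ge> 2" using lR p2 by simp
  then have "card (set R) \<ge> 2" using path_distinct[OF R(1)] distinct_card by metis
  have A'ne: "A' \<noteq> {}"
  proof
    assume "A' = {}"
    then have "set R \<subseteq> {a}" by (auto simp: A'_def)
    then have "card (set R) \<le> 1" using card_mono[of "{a}" "set R"] by simp
    then show False using \<open>card (set R) \<ge> 2\<close> by simp
  qed
  have B'ne: "B' \<noteq> {}"
  proof -
    obtain q where "q \<in> set Q" using Qne by (meson ex_in_conv)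
    then have "q \<in> B'" using aQ B'_def by auto
    then show ?thesis by blast
  qed
  have A'B': "A' \<inter> B' = {}" using disj W1(4) unfolding A'_def B'_def a_def by auto
  obtain W2' where W2': "is_path (V - {a}) E W2'" "hd W2' \<in> A'" "last W2' \<in> B'"
      "set W2' \<inter> A' = {hd W2'}" "set W2' \<inter> B' = {last W2'}"
  proof -
    have s1: "A' \<subseteq> V - {a}" using RV unfolding A'_def by auto
    have s2: "B' \<subseteq> V - {a}" using QV W1V unfolding B'_def by auto
    show ?thesis using connector[OF conn1[rule_format, OF aV] s1 s2 A'ne B'ne A'B'] that by blast
  qed
  have W2'V: "is_path V E W2'" using W2'(1) by (rule path_mono) auto
  have aW2': "a \<notin> set W2'" using W2'(1) path_set by fastforce
  define z where "z = last W2'"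
  have W2'ne: "W2' \<noteq> []" using W2'(1) path_ne by auto
  have W2'R: "set W2' \<inter> set R = {hd W2'}" using W2'(4) aW2' unfolding A'_def by auto
  obtain W2 where W2: "is_path V E W2" "hd W2 \<in> set R" "last W2 \<in> set Q"
      "set W2 \<inter> set R = {hd W2}" "set W2 \<inter> set Q = {last W2}" "hd W2 \<noteq> a"
  proof (cases "z \<in> set W1")
    case True
    then obtain U1 U2 where U: "W1 = U1 @ z # U2" by (meson split_list)
    have za: "z \<noteq> a" using W2'(3) z_def B'_def by auto
    then have U1ne: "U1 \<noteq> []" using U a_def by (cases U1) auto
    have aU1: "a \<in> set U1" using U1ne U a_def by (cases U1) auto
    have dW1: "distinct W1" using W1(1) path_distinct by auto
    have aU2: "a \<notin> set U2" using dW1 aU1 U by auto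
    have zU2: "z \<notin> set U2" using dW1 U by auto
    show ?thesis
    proof (cases "U2 = []")
      case True
      then have zq: "z = last W1" using U by simp
      then have zQ: "z \<in> set Q" using W1(3) by simp
      show ?thesis
      proof (rule that[of W2'])
        show "is_path V E W2'" by fact
        show "hd W2' \<in> set R" using W2'(2) A'_def by auto
        show "last W2' \<in> set Q" using zQ z_def by simp
        show "hd W2' \<noteq> a" using W2'(2) A'_def by auto
        show "set W2' \<inter> set R = {hd W2'}" using W2'(4) aW2' unfolding A'_def by auto
        show "set W2' \<inter> set Q = {last W2'}" using W2'(5) aQ zQ z_def unfolding B'_def by auto
      qed
    next
      case False
      have U2p: "is_path V E U2" using W1(1) U path_suffix[of V E "U1 @ [z]" U2] False by simp
      have e: "{z, hd U2} \<in> E"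
        using W1(1) U path_append[of "U1 @ [z]" U2 V E] False by simp
      have U2W1: "set U2 \<subseteq> set W1" using U by auto
      have lastU2: "last U2 = last W1" using U False by simp
      have zQ: "z \<notin> set Q"
      proof
        assume "z \<in> set Q"
        then have "z = last W1" using W1(5) True by auto
        then show False using lastU2 zU2 False last_in_set by metis
      qed
      have dj: "set W2' \<inter> set U2 = {}"
      proof -
        have sub: "set U2 \<subseteq> B'" using U2W1 aU2 unfolding B'_def by auto
        show ?thesis
        proof (rule equals0I)
          fix x assume x: "x \<in> set W2' \<inter> set U2"
          then have "x \<in> set W2' \<inter> B'" using sub by auto
          then have "x = z" using W2'(5) z_def by auto
          then show False using zU2 x by auto
        qed
      qed
      show ?thesis
      proof (rule that[of "W2' @ U2"])
        show "is_path V E (W2' @ U2)" using W2'V U2p dj e z_def by (intro path_join) auto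
        show "hd (W2' @ U2) \<in> set R" using W2'(2) W2'ne A'_def by auto
        show "last (W2' @ U2) \<in> set Q" using lastU2 False W1(3) by simp
        show "hd (W2' @ U2) \<noteq> a" using W2'(2) W2'ne A'_def by auto
        have U2R: "set U2 \<inter> set R = {}"
        proof (rule equals0I)
          fix x assume x: "x \<in> set U2 \<inter> set R"
          then have "x \<in> set W1" "x \<in> set R" using U2W1 by auto
          then have "x = hd W1" using int1D[OF W1(4)] by metis
          then show False using aU2 a_def x by auto
        qed
        have "set (W2' @ U2) \<inter> set R = (set W2' \<inter> set R) \<union> (set U2 \<inter> set R)" by auto
        also have "\<dots> = {hd W2'}" using W2'R U2R by simp
        finally show "set (W2' @ U2) \<inter> set R = {hd (W2' @ U2)}" using W2'ne by simp
        have W2'Q: "set W2' \<inter> set Q = {}"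
        proof (rule equals0I)
          fix x assume x: "x \<in> set W2' \<inter> set Q"
          then have "x \<noteq> a" using aW2' by auto
          then have "x \<in> set W2' \<inter> B'" using x unfolding B'_def by auto
          then have "x = z" using W2'(5) z_def by auto
          then show False using zQ x by auto
        qed
        have U2Q: "set U2 \<inter> set Q = {last W1}"
        proof
          show "set U2 \<inter> set Q \<subseteq> {last W1}"
          proof
            fix x assume x: "x \<in> set U2 \<inter> set Q"
            then have "x \<in> set W1" "x \<in> set Q" using U2W1 by auto
            then have "x = last W1" using int1D[OF W1(5)] by metis
            then show "x \<in> {last W1}" by simp
          qed
          have "last W1 \<in> set U2" using lastU2 False last_in_set by metis
          then show "{last W1} \<subseteq> set U2 \<inter> set Q" using W1(3) by simp
        qed
        have "set (W2' @ U2) \<inter> set Q = (set W2' \<inter> set Q) \<union> (set U2 \<inter> set Q)" by auto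
        also have "\<dots> = {last W1}" using W2'Q U2Q by simp
        finally show "set (W2' @ U2) \<inter> set Q = {last (W2' @ U2)}" using lastU2 False by simp
      qed
    qed
  next
    case False
    then have zQ: "z \<in> set Q" using W2'(3) z_def B'_def by auto
    show ?thesis
    proof (rule that[of W2'])
      show "is_path V E W2'" by fact
      show "hd W2' \<in> set R" using W2'(2) A'_def by auto
      show "last W2' \<in> set Q" using zQ z_def by simp
      show "hd W2' \<noteq> a" using W2'(2) A'_def by auto
      show "set W2' \<inter> set R = {hd W2'}" using W2'(4) aW2' unfolding A'_def by auto
      show "set W2' \<inter> set Q = {last W2'}" using W2'(5) aQ zQ z_def unfolding B'_def by auto
    qed
  qed
  obtain R1 R2 where Rs: "R = R1 @ a # R2" using aR by (meson split_list)
  obtain Q1 Q2 where Qs: "Q = Q1 @ last W1 # Q2" using W1(3) by (meson split_list)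
  have b1: "length R1 + length Q1 + 1 \<le> p \<and> length R1 + length Q2 + 1 \<le> p \<and>
         length R2 + length Q1 + 1 \<le> p \<and> length R2 + length Q2 + 1 \<le> p"
  proof -
    have r: "is_path V E (R1 @ a # R2)" using R(1) Rs by simp
    have q: "is_path V E (Q1 @ last W1 # Q2)" using Q(1) Qs by simp
    have d: "set (R1 @ a # R2) \<inter> set (Q1 @ last W1 # Q2) = {}" using disj Rs Qs by simp
    have w4: "set W1 \<inter> set (R1 @ a # R2) = {a}" using W1(4) Rs a_def by simp
    have w5: "set W1 \<inter> set (Q1 @ last W1 # Q2) = {last W1}" using W1(5) Qs by simp
    show ?thesis by (rule route_bound[OF bnd r q d W1(1) _ refl w4 w5]) (simp add: a_def)
  qed
  obtain R1' R2' where Rs': "R = R1' @ hd W2 # R2'" using W2(2) by (meson split_list)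
  obtain Q1' Q2' where Qs': "Q = Q1' @ last W2 # Q2'" using W2(3) by (meson split_list)
  have b2: "length R1' + length Q1' + 1 \<le> p \<and> length R1' + length Q2' + 1 \<le> p \<and>
         length R2' + length Q1' + 1 \<le> p \<and> length R2' + length Q2' + 1 \<le> p"
  proof -
    have r: "is_path V E (R1' @ hd W2 # R2')" using R(1) Rs' by simp
    have q: "is_path V E (Q1' @ last W2 # Q2')" using Q(1) Qs' by simp
    have d: "set (R1' @ hd W2 # R2') \<inter> set (Q1' @ last W2 # Q2') = {}" using disj Rs' Qs' by simp
    have w4: "set W2 \<inter> set (R1' @ hd W2 # R2') = {hd W2}" using W2(4) Rs' by simp
    have w5: "set W2 \<inter> set (Q1' @ last W2 # Q2') = {last W2}" using W2(5) Qs' by simp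
    show ?thesis by (rule route_bound[OF bnd r q d W2(1) refl refl w4 w5])
  qed
  have ne: "length R1 \<noteq> length R1'"
  proof
    assume h: "length R1 = length R1'"
    have "R ! length R1 = a" using Rs by simp
    moreover have "R ! length R1' = hd W2" using Rs' by simp
    ultimately show False using h W2(6) by simp
  qed
  have l1: "length R1 + length R2 + 1 = length R" using Rs by simp
  have l1': "length R1' + length R2' + 1 = length R" using Rs' by simp
  have l2: "length Q1 + length Q2 + 1 = length Q" using Qs by simp
  have l2': "length Q1' + length Q2' + 1 = length Q" using Qs' by simp
  have "length R1 < length R1' \<or> length R1' < length R1" using ne by arith
  then show False using b1 b2 l1 l2 l1' l2' lR lQ by (elim disjE) linarith+
qed

lemma four_cases: "(i::nat) < 4 \<Longrightarrow> i = 0 \<or> i = 1 \<or> i = 2 \<or> i = 3" by auto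

lemma perm4: fixes f :: "nat \<Rightarrow> nat"
  assumes "i < 4" "j < 4" "k < 4" "l < 4" "distinct [i,j,k,l]"
  shows "f i + f j + f k + f l = f 0 + f 1 + f 2 + f 3"
  using four_cases[OF assms(1)] four_cases[OF assms(2)] four_cases[OF assms(3)] four_cases[OF assms(4)] assms(5)
  by (elim disjE) simp_all

lemma partner4: fixes f :: "nat \<Rightarrow> nat"
  assumes "i < 4" "j < 4" "k < 4" "l < 4" "distinct [i,j,k,l]" "f 0 + f 1 \<ge> c" "f 2 + f 3 \<ge> c"
  shows "f i + f k \<ge> c \<or> f i + f l \<ge> c \<or> f k + f l \<ge> c"
  using four_cases[OF assms(1)] four_cases[OF assms(2)] four_cases[OF assms(3)] four_cases[OF assms(4)] assms(5-7)
  by (elim disjE) (simp_all add: add.commute)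

lemma other2: assumes "(i::nat) < 4" "j < 4" "i \<noteq> j" shows "\<exists>k l. k < 4 \<and> l < 4 \<and> distinct [i,j,k,l]"
proof -
  define k where "k = (if 0 \<noteq> i \<and> 0 \<noteq> j then 0 else if 1 \<noteq> i \<and> 1 \<noteq> j then 1 else (2::nat))"
  define l where "l = (if 3 \<noteq> i \<and> 3 \<noteq> j then 3 else if 2 \<noteq> i \<and> 2 \<noteq> j then 2 else (1::nat))"
  have "k < 4 \<and> l < 4 \<and> distinct [i,j,k,l]"
    using four_cases[OF assms(1)] four_cases[OF assms(2)] assms(3) unfolding k_def l_def
    by (elim disjE) simp_all
  then show ?thesis by blast
qed

lemma other1: assumes "(i::nat) < 4" "j < 4" "k < 4" "distinct [i,j,k]" shows "\<exists>l. l < 4 \<and> distinct [i,j,k,l]"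
proof -
  define l where "l = (if 0 \<notin> {i,j,k} then 0 else if 1 \<notin> {i,j,k} then 1 else if 2 \<notin> {i,j,k} then 2 else (3::nat))"
  have "l < 4 \<and> distinct [i,j,k,l]"
    using four_cases[OF assms(1)] four_cases[OF assms(2)] four_cases[OF assms(3)] assms(4) unfolding l_def
    by (elim disjE) simp_all
  then show ?thesis by blast
qed


lemma sub_path: assumes "is_path V E P" "u \<in> set P" "v \<in> set P"
  shows "\<exists>S. is_path V E S \<and> set S \<subseteq> set P \<and> hd S = u \<and> last S = v"
proof -
  have r: "reach (set P) E (hd P) w" if w: "w \<in> set P" for w
  proof -
    obtain P1 P2 where sp: "P = P1 @ w # P2" using w by (meson split_list)
    have "is_path V E (P1 @ [w])" using assms(1) sp path_prefix[of V E "P1 @ [w]" P2] by simp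
    then have "is_path (set P) E (P1 @ [w])" by (rule path_restrict) (auto simp: sp)
    moreover have "hd (P1 @ [w]) = hd P" using sp by (cases P1) auto
    ultimately show ?thesis unfolding reach_def by (metis last_snoc)
  qed
  have "reach (set P) E u v" using r[OF assms(2)] r[OF assms(3)] reach_sym reach_trans by metis
  then obtain S where S: "is_path (set P) E S" "hd S = u" "last S = v" unfolding reach_def by blast
  have "set S \<subseteq> set P" using S(1) path_set by auto
  moreover have "is_path V E S" using S(1) path_set[OF assms(1)] path_mono by blast
  ultimately show ?thesis using S by blast
qed

locale arms =
  fixes V :: "'a set" and E :: "'a set set" and x :: 'a and L :: "nat \<Rightarrow> 'a list" and p :: nat
  assumes ap: "\<And>i. i < 4 \<Longrightarrow> is_path V E (x # L i)"
    and ad: "\<And>i j. i < 4 \<Longrightarrow> j < 4 \<Longrightarrow> i \<noteq> j \<Longrightarrow> set (L i) \<inter> set (L j) = {}"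
    and bnd: "\<forall>P. is_path V E P \<longrightarrow> path_length P \<le> p"
begin

lemma xn: "i < 4 \<Longrightarrow> x \<notin> set (L i)"
  using path_distinct[OF ap] by simp

lemma Lpath: "i < 4 \<Longrightarrow> L i \<noteq> [] \<Longrightarrow> is_path V E (L i)"
  using ap path_suffix[of V E "[x]" "L i"] by simp

lemma prepend: assumes "k < 4" "is_path V E (x # T)" "set (L k) \<inter> set (x # T) = {}"
  shows "is_path V E (rev (L k) @ x # T)"
proof (cases "L k = []")
  case True then show ?thesis using assms by simp
next
  case False
  have e: "{x, hd (L k)} \<in> E" using ap[OF assms(1)] False by (cases "L k") (auto simp: path_Cons2)
  show ?thesis
  proof (rule path_join)
    show "is_path V E (rev (L k))" using Lpath[OF assms(1) False] by simp
    show "is_path V E (x # T)" by fact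
    show "set (rev (L k)) \<inter> set (x # T) = {}" using assms(3) by simp
    show "{last (rev (L k)), hd (x # T)} \<in> E" using e False by (simp add: last_rev insert_commute)
  qed
qed

lemma pair_bound: assumes "i < 4" "j < 4" "i \<noteq> j" shows "length (L i) + length (L j) \<le> p"
proof -
  have "is_path V E (rev (L i) @ x # L j)"
    using prepend[OF assms(1) ap[OF assms(2)]] ad[OF assms] xn[OF assms(1)] by auto
  then show ?thesis using bnd by (auto simp: path_length_def)
qed

lemma conn_ineq:
  assumes ijk: "i < 4" "j < 4" "k < 4" "distinct [i,j,k]"
    and W: "is_path V E W" "x \<notin> set W"
    and Ai: "L i = A1 @ hd W # A2" and Bj: "L j = B1 @ last W # B2"
    and Wi: "set W \<inter> set (L i) = {hd W}" and Wj: "set W \<inter> set (L j) = {last W}"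
    and Wk: "set W \<inter> set (L k) = {}"
  shows "length (L k) + length A1 + length W + length B2 \<le> p"
proof -
  have p1: "is_path V E ((x # A1) @ hd W # A2)" using ap[OF ijk(1)] Ai by simp
  have s1: "set W \<inter> set ((x # A1) @ hd W # A2) = {hd W}" using Wi Ai W(2) by auto
  have f: "is_path V E ((x # A1) @ W)" using attach_front(1)[OF p1 W(1) refl s1] .
  have Lj: "L j \<noteq> []" using Bj by simp
  have p2: "is_path V E (B1 @ last W # B2)" using Lpath[OF ijk(2) Lj] Bj by simp
  have s2: "set W \<inter> set (B1 @ last W # B2) = {last W}" using Wj Bj by simp
  have b: "is_path V E (W @ B2)" using attach_back(1)[OF p2 W(1) refl s2] .
  have Wne: "W \<noteq> []" using W(1) path_ne by auto
  have dij: "set (L i) \<inter> set (L j) = {}" using ad ijk by auto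
  have d: "set (x # A1) \<inter> set B2 = {}" using dij xn[OF ijk(2)] Ai Bj by auto
  have g: "is_path V E ((x # A1) @ W @ B2)" using path_glue[OF f b Wne d] .
  have dk1: "set (L k) \<inter> set (L i) = {}" "set (L k) \<inter> set (L j) = {}" using ad ijk by auto
  have dk: "set (L k) \<inter> set (x # A1 @ W @ B2) = {}"
    using dk1 Wk xn[OF ijk(3)] Ai Bj by auto
  have "is_path V E (rev (L k) @ x # A1 @ W @ B2)" using prepend[OF ijk(3) _ dk] g by simp
  then show ?thesis using bnd by (auto simp: path_length_def)
qed

lemma twoedge_ineq:
  assumes ijkl: "i < 4" "j < 4" "k < 4" "l < 4" "distinct [i,j,k,l]"
    and Ai: "L i = A1 @ a # A2" and Ck: "L k = C1 @ c # C2"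
    and S: "is_path V E S" "set S \<subseteq> set (L j)" and e1: "{a, hd S} \<in> E" and e2: "{last S, c} \<in> E"
  shows "length (L l) + length A1 + length S + length C2 + 2 \<le> p"
proof -
  have dij: "set (L i) \<inter> set (L j) = {}" and dik: "set (L i) \<inter> set (L k) = {}"
    and djk: "set (L j) \<inter> set (L k) = {}" and dil: "set (L i) \<inter> set (L l) = {}"
    and djl: "set (L j) \<inter> set (L l) = {}" and dkl: "set (L k) \<inter> set (L l) = {}"
    using ad ijkl by auto
  have xj: "x \<notin> set (L j)" and xk: "x \<notin> set (L k)" using xn ijkl by auto
  have p1: "is_path V E (x # A1 @ [a])"
    using ap[OF ijkl(1)] Ai path_prefix[of V E "x # A1 @ [a]" A2] by simp
  have Sne: "S \<noteq> []" using S(1) path_ne by auto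
  have p2: "is_path V E ((x # A1 @ [a]) @ S)"
  proof (rule path_join[OF p1 S(1)])
    show "set (x # A1 @ [a]) \<inter> set S = {}" using S(2) dij xj Ai by auto
    show "{last (x # A1 @ [a]), hd S} \<in> E" using e1 by simp
  qed
  have Lk: "L k \<noteq> []" using Ck by simp
  have p3: "is_path V E (c # C2)" using Lpath[OF ijkl(3) Lk] Ck path_suffix[of V E C1 "c # C2"] by simp
  have p4: "is_path V E ((x # A1 @ [a]) @ S @ c # C2)"
  proof -
    have "is_path V E (((x # A1 @ [a]) @ S) @ (c # C2))"
    proof (rule path_join[OF p2 p3])
      show "set ((x # A1 @ [a]) @ S) \<inter> set (c # C2) = {}" using S(2) dik djk xk Ai Ck by auto
      show "{last ((x # A1 @ [a]) @ S), hd (c # C2)} \<in> E" using e2 Sne by simp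
    qed
    then show ?thesis by simp
  qed
  have dl: "set (L l) \<inter> set (x # A1 @ a # S @ c # C2) = {}"
    using S(2) dil djl dkl xn[OF ijkl(4)] Ai Ck by auto
  have "is_path V E (rev (L l) @ x # A1 @ a # S @ c # C2)" using prepend[OF ijkl(4) _ dl] p4 by simp
  then show ?thesis using bnd by (auto simp: path_length_def)
qed


lemma edge_ineq:
  assumes ijk: "i < 4" "j < 4" "k < 4" "distinct [i,j,k]"
    and ab: "{a, b} \<in> E" and Ai: "L i = A1 @ a # A2" and Bj: "L j = B1 @ b # B2"
  shows "length (L k) + length A1 + 2 + length B2 \<le> p"
proof -
  have dij: "set (L i) \<inter> set (L j) = {}" and dik: "set (L i) \<inter> set (L k) = {}"
    and djk: "set (L j) \<inter> set (L k) = {}" using ad ijk by auto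
  have aL: "a \<in> set (L i)" and bL: "b \<in> set (L j)" using Ai Bj by auto
  have aV: "a \<in> V" and bV: "b \<in> V" using aL bL path_set[OF ap[OF ijk(1)]] path_set[OF ap[OF ijk(2)]] by auto
  have ab': "a \<noteq> b" using aL bL dij by auto
  have W: "is_path V E [a, b]" using aV bV ab' ab by (simp add: path_Cons2)
  have "length (L k) + length A1 + length [a, b] + length B2 \<le> p"
  proof (rule conn_ineq[OF ijk W])
    show "x \<notin> set [a, b]" using aL bL xn ijk by auto
    show "L i = A1 @ hd [a, b] # A2" using Ai by simp
    show "L j = B1 @ last [a, b] # B2" using Bj by simp
    show "set [a, b] \<inter> set (L i) = {hd [a, b]}" using aL bL dij by auto
    show "set [a, b] \<inter> set (L j) = {last [a, b]}" using aL bL dij by auto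
    show "set [a, b] \<inter> set (L k) = {}" using aL bL dik djk by auto
  qed
  then show ?thesis by simp
qed

lemma final_config:
  assumes ijkl: "i < 4" "j < 4" "k < 4" "l < 4" "distinct [i,j,k,l]"
    and mem: "a \<in> set (L i)" "b \<in> set (L j)" "b' \<in> set (L j)" "c \<in> set (L k)"
    and e: "{a, b} \<in> E" "{b', c} \<in> E"
    and t1: "length (L 0) + length (L 1) \<ge> p - 1" and t2: "length (L 2) + length (L 3) \<ge> p - 1"
  shows False
proof -
  obtain A1 A2 where Ai: "L i = A1 @ a # A2" using mem(1) by (meson split_list)
  obtain B1 B2 where Bj: "L j = B1 @ b # B2" using mem(2) by (meson split_list)
  obtain B1' B2' where Bj': "L j = B1' @ b' # B2'" using mem(3) by (meson split_list)
  obtain C1 C2 where Ck: "L k = C1 @ c # C2" using mem(4) by (meson split_list)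
  have d: "distinct [i,j,k]" "distinct [i,j,l]" "distinct [j,i,k]" "distinct [j,i,l]"
          "distinct [j,k,i]" "distinct [j,k,l]" "distinct [k,j,i]" "distinct [k,j,l]"
          "distinct [k,j,i,l]" using ijkl(5) by auto
  have e': "{b, a} \<in> E" "{c, b'} \<in> E" using e by (auto simp: insert_commute)
  have i1: "length (L k) + length A1 + 2 + length B2 \<le> p"
    using edge_ineq[OF ijkl(1,2,3) d(1) e(1) Ai Bj] .
  have i2: "length (L l) + length A1 + 2 + length B2 \<le> p"
    using edge_ineq[OF ijkl(1,2,4) d(2) e(1) Ai Bj] .
  have i3: "length (L k) + length B1 + 2 + length A2 \<le> p"
    using edge_ineq[OF ijkl(2,1,3) d(3) e'(1) Bj Ai] .
  have i4: "length (L l) + length B1 + 2 + length A2 \<le> p"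
    using edge_ineq[OF ijkl(2,1,4) d(4) e'(1) Bj Ai] .
  have i5: "length (L i) + length B1' + 2 + length C2 \<le> p"
    using edge_ineq[OF ijkl(2,3,1) d(5) e(2) Bj' Ck] .
  have i6: "length (L l) + length B1' + 2 + length C2 \<le> p"
    using edge_ineq[OF ijkl(2,3,4) d(6) e(2) Bj' Ck] .
  have i7: "length (L i) + length C1 + 2 + length B2' \<le> p"
    using edge_ineq[OF ijkl(3,2,1) d(7) e'(2) Ck Bj'] .
  have i8: "length (L l) + length C1 + 2 + length B2' \<le> p"
    using edge_ineq[OF ijkl(3,2,4) d(8) e'(2) Ck Bj'] .
  obtain S where S: "is_path V E S" "set S \<subseteq> set (L j)" "hd S = b" "last S = b'"
  proof -
    have Lj: "L j \<noteq> []" using mem(2) by auto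
    show ?thesis using sub_path[OF Lpath[OF ijkl(2) Lj] mem(2,3)] that by blast
  qed
  have Sne: "S \<noteq> []" using S(1) path_ne by auto
  have lS: "length S \<ge> 1" using Sne by (cases S) auto
  have i9: "length (L l) + length A1 + length S + length C2 + 2 \<le> p"
    using twoedge_ineq[OF ijkl Ai Ck S(1,2)] e S(3,4) by simp
  have rS: "is_path V E (rev S)" "set (rev S) \<subseteq> set (L j)" using S by auto
  have i10: "length (L l) + length C1 + length (rev S) + length A2 + 2 \<le> p"
    using twoedge_ineq[OF ijkl(3,2,1,4) d(9) Ck Ai rS] e' S(3,4) Sne by (simp add: hd_rev last_rev)
  have li: "length A1 + length A2 + 1 = length (L i)" using Ai by simp
  have lj: "length B1 + length B2 + 1 = length (L j)" using Bj by simp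
  have lj': "length B1' + length B2' + 1 = length (L j)" using Bj' by simp
  have lk: "length C1 + length C2 + 1 = length (L k)" using Ck by simp
  have T: "length (L i) + length (L j) + length (L k) + length (L l) =
     length (L 0) + length (L 1) + length (L 2) + length (L 3)"
    using perm4[where f="\<lambda>m. length (L m)", OF ijkl] by simp
  have P: "length (L i) + length (L k) \<ge> p - 1 \<or> length (L i) + length (L l) \<ge> p - 1 \<or>
           length (L k) + length (L l) \<ge> p - 1"
    using partner4[where f="\<lambda>m. length (L m)" and c="p - 1", OF ijkl] t1 t2 by simp
  have lrS: "length (rev S) = length S" by simp
  show False using P i1 i2 i3 i4 i5 i6 i7 i8 i9 i10 li lj lj' lk T t1 t2 lS lrS
    by (elim disjE) linarith+
qed


lemma conn_edge:
  assumes ij: "i < 4" "j < 4" "i \<noteq> j"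
    and W: "is_path V E W" "x \<notin> set W" "hd W \<in> set (L i)" "last W \<in> set (L j)"
       "set W \<inter> set (L i) = {hd W}" "set W \<inter> set (L j) = {last W}"
       "\<forall>m<4. m \<noteq> i \<longrightarrow> m \<noteq> j \<longrightarrow> set W \<inter> set (L m) = {}"
    and t1: "length (L 0) + length (L 1) \<ge> p - 1" and t2: "length (L 2) + length (L 3) \<ge> p - 1"
  shows "{hd W, last W} \<in> E"
proof -
  obtain k l where kl: "k < 4" "l < 4" "distinct [i,j,k,l]" using other2[OF ij] by blast
  obtain A1 A2 where Ai: "L i = A1 @ hd W # A2" using W(3) by (meson split_list)
  obtain B1 B2 where Bj: "L j = B1 @ last W # B2" using W(4) by (meson split_list)
  have Wne: "W \<noteq> []" using W(1) path_ne by auto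
  have Wk: "set W \<inter> set (L k) = {}" and Wl: "set W \<inter> set (L l) = {}" using W(7) kl by auto
  have d: "distinct [i,j,k]" "distinct [i,j,l]" "distinct [j,i,k]" "distinct [j,i,l]" using kl by auto
  have i1: "length (L k) + length A1 + length W + length B2 \<le> p"
    using conn_ineq[OF ij(1,2) kl(1) d(1) W(1,2) Ai Bj W(5,6) Wk] .
  have i2: "length (L l) + length A1 + length W + length B2 \<le> p"
    using conn_ineq[OF ij(1,2) kl(2) d(2) W(1,2) Ai Bj W(5,6) Wl] .
  have rW: "is_path V E (rev W)" "x \<notin> set (rev W)" using W by auto
  have hr: "hd (rev W) = last W" "last (rev W) = hd W" using Wne by (auto simp: hd_rev last_rev)
  have Bj2: "L j = B1 @ hd (rev W) # B2" and Ai2: "L i = A1 @ last (rev W) # A2" using Bj Ai hr by auto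
  have r5: "set (rev W) \<inter> set (L j) = {hd (rev W)}" and r6: "set (rev W) \<inter> set (L i) = {last (rev W)}"
    using W(5,6) hr by auto
  have rk: "set (rev W) \<inter> set (L k) = {}" and rl: "set (rev W) \<inter> set (L l) = {}" using Wk Wl by auto
  have i3: "length (L k) + length B1 + length (rev W) + length A2 \<le> p"
    using conn_ineq[OF ij(2,1) kl(1) d(3) rW Bj2 Ai2 r5 r6 rk] .
  have i4: "length (L l) + length B1 + length (rev W) + length A2 \<le> p"
    using conn_ineq[OF ij(2,1) kl(2) d(4) rW Bj2 Ai2 r5 r6 rl] .
  have li: "length A1 + length A2 + 1 = length (L i)" using Ai by simp
  have lj: "length B1 + length B2 + 1 = length (L j)" using Bj by simp
  have T: "length (L i) + length (L j) + length (L k) + length (L l) =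
     length (L 0) + length (L 1) + length (L 2) + length (L 3)"
    using perm4[where f="\<lambda>m. length (L m)", OF ij(1,2) kl] by simp
  have le2: "length W \<le> 2" using i1 i2 i3 i4 li lj T t1 t2 by simp
  have "hd W \<noteq> last W" using W(3,4) ad[OF ij] by auto
  then have ge2: "length W \<ge> 2" using Wne by (cases W; cases "tl W") auto
  then have "length W = 2" using le2 by simp
  then obtain u v where uv: "W = [u, v]" by (cases W; cases "tl W") auto
  then show ?thesis using W(1) by (simp add: path_Cons2)
qed

lemma contra:
  assumes conn1: "connected_graph (V - {x}) E"
    and t1: "length (L 0) + length (L 1) \<ge> p - 1" and t2: "length (L 2) + length (L 3) \<ge> p - 1"
    and p3: "p \<ge> 3"
  shows False
proof -
  define U where "U = set (L 0) \<union> set (L 1) \<union> set (L 2) \<union> set (L 3)"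
  have inU: "set (L i) \<subseteq> U" if "i < 4" for i
    using four_cases[OF that] unfolding U_def by auto
  have Uin: "\<exists>i<4. v \<in> set (L i)" if "v \<in> U" for v
  proof -
    from that have "v \<in> set (L 0) \<or> v \<in> set (L 1) \<or> v \<in> set (L 2) \<or> v \<in> set (L 3)"
      by (simp add: U_def)
    then show ?thesis
    proof (elim disjE)
      assume "v \<in> set (L 0)" then show ?thesis by (intro exI[of _ 0]) simp
    next
      assume "v \<in> set (L 1)" then show ?thesis by (intro exI[of _ 1]) simp
    next
      assume "v \<in> set (L 2)" then show ?thesis by (intro exI[of _ 2]) simp
    next
      assume "v \<in> set (L 3)" then show ?thesis by (intro exI[of _ 3]) simp
    qed
  qed
  have LV: "set (L i) \<subseteq> V - {x}" if "i < 4" for i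
    using path_set[OF ap[OF that]] xn[OF that] by auto
  have UV: "U \<subseteq> V - {x}" using LV[of 0] LV[of 1] LV[of 2] LV[of 3] unfolding U_def by simp
  have pathW: "is_path V E W" "x \<notin> set W" if "is_path (V - {x}) E W" for W
    using that path_set[OF that] by (auto intro: path_mono)
  obtain i0 where i0: "i0 < 4" "i0 < 2" "L i0 \<noteq> []"
  proof (cases "L 0 = []")
    case True
    then have "L 1 \<noteq> []" using t1 p3 by auto
    then show ?thesis using that[of 1] by simp
  next
    case False then show ?thesis using that[of 0] by simp
  qed
  obtain j0 where j0: "j0 < 4" "j0 \<ge> 2" "L j0 \<noteq> []"
  proof (cases "L 2 = []")
    case True
    then have "L 3 \<noteq> []" using t2 p3 by auto
    then show ?thesis using that[of 3] by simp
  next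
    case False then show ?thesis using that[of 2] by simp
  qed
  define A where "A = set (L i0)"
  define B where "B = U - A"
  have A0: "A \<noteq> {}" "A \<subseteq> V - {x}" using i0 LV unfolding A_def by auto
  have B0: "B \<noteq> {}"
  proof -
    obtain v where v: "v \<in> set (L j0)" using j0(3) by (cases "L j0") auto
    have "v \<notin> A" using ad[of i0 j0] i0 j0 v unfolding A_def by auto
    then have "v \<in> B" using inU[OF j0(1)] v unfolding B_def by auto
    then show ?thesis by auto
  qed
  have B1: "B \<subseteq> V - {x}" "A \<inter> B = {}" using UV unfolding B_def by auto
  obtain W1 where W1: "is_path (V - {x}) E W1" "hd W1 \<in> A" "last W1 \<in> B"
      "set W1 \<inter> A = {hd W1}" "set W1 \<inter> B = {last W1}"
    using connector[OF conn1 A0(2) B1(1) A0(1) B0 B1(2)] by blast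
  obtain j where j: "j < 4" "last W1 \<in> set (L j)" using W1(3) Uin unfolding B_def by auto
  have ji0: "j \<noteq> i0" using j W1(3) unfolding B_def A_def by auto
  have LjB: "set (L j) \<subseteq> B" using inU[OF j(1)] ad[OF j(1) i0(1) ji0] unfolding B_def A_def by auto
  have W1m: "\<forall>m<4. m \<noteq> i0 \<longrightarrow> m \<noteq> j \<longrightarrow> set W1 \<inter> set (L m) = {}"
  proof (intro allI impI)
    fix m assume m: "m < 4" "m \<noteq> i0" "m \<noteq> j"
    have "set (L m) \<subseteq> B" using inU[OF m(1)] ad[OF m(1) i0(1) m(2)] unfolding B_def A_def by auto
    then have "set W1 \<inter> set (L m) \<subseteq> {last W1}" using W1(5) by auto
    moreover have "last W1 \<notin> set (L m)" using ad[OF m(1) j(1) m(3)] j(2) by auto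
    ultimately show "set W1 \<inter> set (L m) = {}" by auto
  qed
  have W1j: "set W1 \<inter> set (L j) = {last W1}"
  proof
    show "set W1 \<inter> set (L j) \<subseteq> {last W1}" using W1(5) LjB by auto
    have "W1 \<noteq> []" using W1(1) path_ne by auto
    then have "last W1 \<in> set W1" by simp
    then show "{last W1} \<subseteq> set W1 \<inter> set (L j)" using j(2) by simp
  qed
  have e1: "{hd W1, last W1} \<in> E"
    using conn_edge[OF i0(1) j(1) ji0[symmetric] pathW[OF W1(1)] W1(2)[unfolded A_def] j(2)
       W1(4)[unfolded A_def] W1j W1m t1 t2] .
  obtain k0 where k0: "k0 < 4" "k0 \<noteq> i0" "k0 \<noteq> j" "L k0 \<noteq> []"
  proof (rule ccontr)
    assume "\<not> thesis"
    then have emp: "\<forall>m<4. m \<noteq> i0 \<longrightarrow> m \<noteq> j \<longrightarrow> L m = []" using that by blast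
    obtain k l where kl: "k < 4" "l < 4" "distinct [i0,j,k,l]" using other2[OF i0(1) j(1) ji0[symmetric]] by blast
    have "L k = []" "L l = []" using emp kl by auto
    moreover have "length (L i0) + length (L j) + length (L k) + length (L l) =
       length (L 0) + length (L 1) + length (L 2) + length (L 3)"
      using perm4[where f="\<lambda>m. length (L m)", OF i0(1) j(1) kl] by simp
    moreover have "length (L i0) + length (L j) \<le> p" using pair_bound[OF i0(1) j(1) ji0[symmetric]] .
    ultimately show False using t1 t2 p3 by simp
  qed
  define A' where "A' = set (L i0) \<union> set (L j)"
  define B' where "B' = U - A'"
  have A'0: "A' \<noteq> {}" "A' \<subseteq> V - {x}" using A0 LV[OF j(1)] unfolding A'_def A_def by auto
  have B'0: "B' \<noteq> {}"
  proof -
    obtain v where v: "v \<in> set (L k0)" using k0(4) by (cases "L k0") auto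
    have "v \<notin> A'" using ad[OF k0(1) i0(1) k0(2)] ad[OF k0(1) j(1) k0(3)] v unfolding A'_def by auto
    then have "v \<in> B'" using inU[OF k0(1)] v unfolding B'_def by auto
    then show ?thesis by auto
  qed
  have B'1: "B' \<subseteq> V - {x}" "A' \<inter> B' = {}" using UV unfolding B'_def by auto
  obtain W2 where W2: "is_path (V - {x}) E W2" "hd W2 \<in> A'" "last W2 \<in> B'"
      "set W2 \<inter> A' = {hd W2}" "set W2 \<inter> B' = {last W2}"
    using connector[OF conn1 A'0(2) B'1(1) A'0(1) B'0 B'1(2)] by blast
  obtain k where k: "k < 4" "last W2 \<in> set (L k)" using W2(3) Uin unfolding B'_def by auto
  have ki0: "k \<noteq> i0" and kj: "k \<noteq> j" using k W2(3) unfolding B'_def A'_def by auto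
  have LkB: "set (L k) \<subseteq> B'" using inU[OF k(1)] ad[OF k(1) i0(1) ki0] ad[OF k(1) j(1) kj]
    unfolding B'_def A'_def by auto
  have W2k: "set W2 \<inter> set (L k) = {last W2}" using W2(5) LkB k(2) by auto
  have W2m: "set W2 \<inter> set (L m) = {}" if m: "m < 4" "m \<noteq> i0" "m \<noteq> j" "m \<noteq> k" for m
  proof -
    have "set (L m) \<subseteq> B'" using inU[OF m(1)] ad[OF m(1) i0(1) m(2)] ad[OF m(1) j(1) m(3)]
      unfolding B'_def A'_def by auto
    then have "set W2 \<inter> set (L m) \<subseteq> {last W2}" using W2(5) by auto
    moreover have "last W2 \<notin> set (L m)" using ad[OF m(1) k(1) m(4)] k(2) by auto
    ultimately show ?thesis by auto
  qed
  have dijk: "distinct [i0, j, k]" using ji0 ki0 kj by auto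
  show False
  proof (cases "hd W2 \<in> set (L j)")
    case True
    have W2i0: "set W2 \<inter> set (L i0) = {}"
    proof -
      have "set W2 \<inter> set (L i0) \<subseteq> {hd W2}" using W2(4) unfolding A'_def by auto
      moreover have "hd W2 \<notin> set (L i0)" using True ad[OF j(1) i0(1) ji0] by auto
      ultimately show ?thesis by auto
    qed
    have W2j: "set W2 \<inter> set (L j) = {hd W2}" using W2(4) True unfolding A'_def by auto
    have W2m': "\<forall>m<4. m \<noteq> j \<longrightarrow> m \<noteq> k \<longrightarrow> set W2 \<inter> set (L m) = {}"
      using W2m W2i0 by auto
    have e2: "{hd W2, last W2} \<in> E"
      using conn_edge[OF j(1) k(1) kj[symmetric] pathW[OF W2(1)] True k(2) W2j W2k W2m' t1 t2] .
    obtain l where l: "l < 4" "distinct [i0, j, k, l]" using other1[OF i0(1) j(1) k(1) dijk] by blast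
    show False
      using final_config[OF i0(1) j(1) k(1) l(1) l(2) W1(2)[unfolded A_def] j(2) True k(2) e1 e2 t1 t2] .
  next
    case False
    then have hi0: "hd W2 \<in> set (L i0)" using W2(2) unfolding A'_def by auto
    have W2j: "set W2 \<inter> set (L j) = {}"
    proof -
      have "set W2 \<inter> set (L j) \<subseteq> {hd W2}" using W2(4) unfolding A'_def by auto
      then show ?thesis using False by auto
    qed
    have W2i: "set W2 \<inter> set (L i0) = {hd W2}" using W2(4) hi0 unfolding A'_def by auto
    have W2m': "\<forall>m<4. m \<noteq> i0 \<longrightarrow> m \<noteq> k \<longrightarrow> set W2 \<inter> set (L m) = {}"
      using W2m W2j by auto
    have e2: "{hd W2, last W2} \<in> E"
      using conn_edge[OF i0(1) k(1) ki0[symmetric] pathW[OF W2(1)] hi0 k(2) W2i W2k W2m' t1 t2] .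
    have e1': "{last W1, hd W1} \<in> E" using e1 by (simp add: insert_commute)
    have djik: "distinct [j, i0, k]" using dijk by auto
    obtain l where l: "l < 4" "distinct [j, i0, k, l]" using other1[OF j(1) i0(1) k(1) djik] by blast
    show False
      using final_config[OF j(1) i0(1) k(1) l(1) l(2) j(2) W1(2)[unfolded A_def] hi0 k(2) e1' e2 t1 t2] .
  qed
qed

end


lemma lemmaS:
  assumes bnd: "\<forall>P. is_path V E P \<longrightarrow> path_length P \<le> p"
    and conn1: "\<forall>v\<in>V. connected_graph (V - {v}) E"
    and p3: "p \<ge> 3"
    and R: "is_path V E R" "path_length R \<ge> p - 1"
    and Q: "is_path V E Q" "path_length Q \<ge> p - 1"
    and int: "set R \<inter> set Q = {x}"
  shows False
proof -
  have xR: "x \<in> set R" and xQ: "x \<in> set Q" using int by auto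
  obtain R1 R2 where Rs: "R = R1 @ x # R2" using xR by (meson split_list)
  obtain Q1 Q2 where Qs: "Q = Q1 @ x # Q2" using xQ by (meson split_list)
  have xV: "x \<in> V" using xR path_set[OF R(1)] by auto
  have dR: "distinct (R1 @ x # R2)" using path_distinct[OF R(1)] Rs by simp
  have dQ: "distinct (Q1 @ x # Q2)" using path_distinct[OF Q(1)] Qs by simp
  have xR1: "x \<notin> set R1" and xR2: "x \<notin> set R2" and R12: "set R1 \<inter> set R2 = {}" using dR by auto
  have xQ1: "x \<notin> set Q1" and xQ2: "x \<notin> set Q2" and Q12: "set Q1 \<inter> set Q2 = {}" using dQ by auto
  have RQ: "(set R1 \<union> set R2) \<inter> (set Q1 \<union> set Q2) = {}"
  proof (rule equals0I)
    fix v assume v: "v \<in> (set R1 \<union> set R2) \<inter> (set Q1 \<union> set Q2)"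
    then have "v \<in> set R \<inter> set Q" using Rs Qs by auto
    then have "v = x" using int by auto
    then show False using v xR1 xR2 xQ1 xQ2 by auto
  qed
  have RQ': "set R1 \<inter> set Q1 = {}" "set R1 \<inter> set Q2 = {}" "set R2 \<inter> set Q1 = {}" "set R2 \<inter> set Q2 = {}"
    using RQ by auto
  define L where "L i = (if i = 0 then rev R1 else if i = (1::nat) then R2 else if i = 2 then rev Q1 else Q2)" for i
  have L0: "L 0 = rev R1" and L1: "L 1 = R2" and L2: "L 2 = rev Q1" and L3: "L 3 = Q2"
    unfolding L_def by auto
  have pR1: "is_path V E (x # rev R1)"
  proof -
    have "is_path V E (R1 @ [x])" using R(1) Rs path_prefix[of V E "R1 @ [x]" R2] by simp
    then show ?thesis using path_rev[of V E "R1 @ [x]"] by simp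
  qed
  have pR2: "is_path V E (x # R2)" using R(1) Rs path_suffix[of V E R1 "x # R2"] by simp
  have pQ1: "is_path V E (x # rev Q1)"
  proof -
    have "is_path V E (Q1 @ [x])" using Q(1) Qs path_prefix[of V E "Q1 @ [x]" Q2] by simp
    then show ?thesis using path_rev[of V E "Q1 @ [x]"] by simp
  qed
  have pQ2: "is_path V E (x # Q2)" using Q(1) Qs path_suffix[of V E Q1 "x # Q2"] by simp
  interpret A: arms V E x L p
  proof
    fix i :: nat assume i: "i < 4"
    show "is_path V E (x # L i)"
      using four_cases[OF i] pR1 pR2 pQ1 pQ2 L0 L1 L2 L3 by (elim disjE) simp_all
  next
    fix i j :: nat assume i: "i < 4" and j: "j < 4" and ij: "i \<noteq> j"
    show "set (L i) \<inter> set (L j) = {}"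
      using four_cases[OF i] four_cases[OF j] ij R12 Q12 RQ' L0 L1 L2 L3
      by (elim disjE) (simp_all add: Int_commute)
  next
    show "\<forall>P. is_path V E P \<longrightarrow> path_length P \<le> p" by fact
  qed
  have t1: "length (L 0) + length (L 1) \<ge> p - 1" using R(2) Rs L0 L1 by (simp add: path_length_def)
  have t2: "length (L 2) + length (L 3) \<ge> p - 1" using Q(2) Qs L2 L3 by (simp add: path_length_def)
  show False using A.contra[OF conn1[rule_format, OF xV] t1 t2 p3] .
qed


lemma prefix_reach: assumes "is_path S E P" "u \<in> set P" shows "reach S E (hd P) u"
proof -
  obtain P1 P2 where sp: "P = P1 @ u # P2" using assms(2) by (meson split_list)
  have "is_path S E (P1 @ [u])" using assms(1) sp path_prefix[of S E "P1 @ [u]" P2] by simp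
  moreover have "hd (P1 @ [u]) = hd P" using sp by (cases P1) auto
  ultimately show ?thesis unfolding reach_def by (metis last_snoc)
qed

lemma reach_comp: assumes "reach S E v c" shows "reach {u. reach S E v u} E v c"
proof -
  obtain P where P: "is_path S E P" "hd P = v" "last P = c" using assms unfolding reach_def by blast
  have "set P \<subseteq> {u. reach S E v u}" using prefix_reach[OF P(1)] P(2) by auto
  then have "is_path {u. reach S E v u} E P" using P(1) by (rule path_restrict[rotated])
  then show ?thesis using P unfolding reach_def by blast
qed

lemma cross_edge: assumes "is_path S E P" "hd P \<in> K" "last P \<notin> K"
  shows "\<exists>a b. a \<in> K \<and> b \<notin> K \<and> b \<in> S \<and> a \<in> S \<and> {a, b} \<in> E"
proof -
  have Pne: "P \<noteq> []" using assms(1) path_ne by auto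
  have h1: "\<exists>a\<in>set P. a \<in> K" using assms(2) Pne by (intro bexI[of _ "hd P"]) auto
  have h2: "\<exists>b\<in>set P. b \<notin> K" using assms(3) Pne by (intro bexI[of _ "last P"]) auto
  obtain i where i: "Suc i < length P" "P!i \<in> K \<longleftrightarrow> P!Suc i \<notin> K"
    using crossing[OF h1 h2] by blast
  have e: "{P!i, P!Suc i} \<in> E" using assms(1) i(1) unfolding is_path_def by blast
  have m: "P!i \<in> S" "P!Suc i \<in> S"
    using path_set[OF assms(1)] nth_mem[of i P] nth_mem[of "Suc i" P] i(1) by auto
  show ?thesis
  proof (cases "P!i \<in> K")
    case True then show ?thesis using i e m by blast
  next
    case False then show ?thesis using i e m by (metis insert_commute)
  qed
qed

lemma candidate:
  assumes fin: "finite V" and conn1: "\<forall>v\<in>V. connected_graph (V - {v}) E"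
    and XV: "X \<subseteq> V" and cX: "connected_graph X E" and Yne: "V - X \<noteq> {}"
    and ex: "\<exists>x0\<in>X. \<exists>y0\<in>V - X. {x0, y0} \<in> E" and X2: "\<exists>a\<in>X. \<exists>b\<in>X. a \<noteq> b"
  shows "\<exists>x\<in>X. \<exists>y\<in>V - X. {x, y} \<in> E \<and> connected_graph (X - {x}) E"
proof -
  define N where "N = {x\<in>X. \<exists>y\<in>V - X. {x, y} \<in> E}"
  define comp where "comp S w = {u. reach S E w u}" for S w
  define good where "good pr \<longleftrightarrow> fst pr \<in> N \<and> snd pr \<in> X \<and> snd pr \<noteq> fst pr" for pr
  define m where "m pr = card (comp (X - {fst pr}) (snd pr))" for pr
  obtain x0 where x0: "x0 \<in> N" using ex unfolding N_def by auto
  obtain w0 where w0: "w0 \<in> X" "w0 \<noteq> x0" using X2 by blast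
  have "good (x0, w0)" using x0 w0 unfolding good_def by simp
  then obtain pr where pr: "good pr" "\<forall>q. good q \<longrightarrow> m pr \<le> m q"
    using ex_has_least_nat[of good "(x0, w0)" m] by blast
  define x where "x = fst pr"
  define w where "w = snd pr"
  have xN: "x \<in> N" and wX: "w \<in> X" and wx: "w \<noteq> x" using pr(1) unfolding good_def x_def w_def by simp_all
  have xX: "x \<in> X" using xN unfolding N_def by simp
  define K where "K = comp (X - {x}) w"
  have Ksub: "K \<subseteq> X - {x}"
  proof
    fix u assume "u \<in> K"
    then have "reach (X - {x}) E w u" by (simp add: K_def comp_def)
    then show "u \<in> X - {x}" using reach_mem[of "X - {x}" E w u] by simp
  qed
  have wK: "w \<in> K" using reach_refl[of w "X - {x}" E] wX wx by (simp add: K_def comp_def)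
  have finX: "finite X" using finite_subset[OF XV fin] .
  have finK: "finite K" using finite_subset[OF Ksub] finX by simp
  have mmin: "card K \<le> card (comp (X - {x'}) v)" if "x' \<in> N" "v \<in> X" "v \<noteq> x'" for x' v
  proof -
    have "good (x', v)" using that unfolding good_def by simp
    then have "m pr \<le> m (x', v)" using pr(2) by blast
    then show ?thesis unfolding m_def K_def x_def w_def by simp
  qed
  obtain x' where x'K: "x' \<in> K" and x'N: "x' \<in> N"
  proof -
    obtain y where y: "y \<in> V - X" using Yne by blast
    have xV: "x \<in> V" using xX XV by auto
    have "w \<in> V - {x}" "y \<in> V - {x}" using wX XV wx y xX by auto
    then obtain P where P: "is_path (V - {x}) E P" "hd P = w" "last P = y"
      using conn1[rule_format, OF xV] unfolding connected_graph_def by blast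
    have "y \<notin> K" using y Ksub by auto
    then have l: "last P \<notin> K" using P(3) by simp
    have h: "hd P \<in> K" using P(2) wK by simp
    obtain a b where ab: "a \<in> K" "b \<notin> K" "b \<in> V - {x}" "a \<in> V - {x}" "{a, b} \<in> E"
      using cross_edge[OF P(1) h l] by blast
    have "b \<notin> X"
    proof
      assume bX: "b \<in> X"
      have "reach (X - {x}) E w a" using ab(1) unfolding K_def comp_def by simp
      then have "reach (X - {x}) E w b" using reach_step[of "X - {x}" E w a b] ab bX by simp
      then show False using ab(2) unfolding K_def comp_def by simp
    qed
    then have "a \<in> N" using ab Ksub unfolding N_def by auto
    then show ?thesis using that ab(1) by blast
  qed
  have x'x: "x' \<noteq> x" using x'K Ksub by auto
  have x'X: "x' \<in> X" using x'N N_def by auto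
  have xX': "x \<in> X - {x'}" using xX x'x by auto
  have toX: "reach (X - {x'}) E v x" if v: "v \<in> X - {x'}" for v
  proof (rule ccontr)
    assume nr: "\<not> reach (X - {x'}) E v x"
    have vx: "v \<noteq> x" using nr reach_refl[OF xX'] by auto
    show False
    proof (cases "v \<in> K")
      case True
      define Ks where "Ks = comp (X - {x'}) v"
      have "Ks \<subseteq> K - {x'}"
      proof
        fix u assume "u \<in> Ks"
        then have ru: "reach (X - {x'}) E v u" unfolding Ks_def comp_def by simp
        then obtain P where P: "is_path (X - {x'}) E P" "hd P = v" "last P = u" unfolding reach_def by blast
        have "x \<notin> set P"
        proof
          assume "x \<in> set P"
          then have "reach (X - {x'}) E (hd P) x" by (rule prefix_reach[OF P(1)])
          then show False using P(2) nr by simp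
        qed
        then have "set P \<subseteq> X - {x}" using path_set[OF P(1)] by auto
        then have "is_path (X - {x}) E P" by (rule path_restrict[OF P(1)])
        then have "reach (X - {x}) E v u" using P unfolding reach_def by blast
        moreover have "reach (X - {x}) E w v" using True unfolding K_def comp_def by simp
        ultimately have "reach (X - {x}) E w u" using reach_trans[of "X - {x}" E w v u] by simp
        then have "u \<in> K" unfolding K_def comp_def by simp
        moreover have "u \<noteq> x'" using ru reach_mem[of "X - {x'}" E v u] by simp
        ultimately show "u \<in> K - {x'}" by simp
      qed
      then have "card Ks \<le> card (K - {x'})" using finK by (intro card_mono) auto
      also have "\<dots> < card K" by (rule card_Diff1_less[OF finK x'K])
      finally have "card Ks < card K" .
      moreover have "card K \<le> card Ks" using mmin[OF x'N] v unfolding Ks_def by auto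
      ultimately show False by simp
    next
      case False
      define C where "C = comp (X - {x}) v"
      have vC: "v \<in> C" using reach_refl[of v "X - {x}" E] v vx by (simp add: C_def comp_def)
      have CK: "C \<inter> K = {}"
      proof (rule equals0I)
        fix u assume "u \<in> C \<inter> K"
        then have r1: "reach (X - {x}) E v u" and r2: "reach (X - {x}) E w u" unfolding C_def K_def comp_def by simp_all
        have "reach (X - {x}) E u v" using reach_sym[OF r1] .
        then have "reach (X - {x}) E w v" using reach_trans[OF r2] by blast
        then show False using False unfolding K_def comp_def by simp
      qed
      have Csub: "C \<subseteq> X - {x}"
      proof
        fix u assume "u \<in> C"
        then have "reach (X - {x}) E v u" by (simp add: C_def comp_def)
        then show "u \<in> X - {x}" using reach_mem[of "X - {x}" E v u] by simp
      qed
      obtain P where P: "is_path X E P" "hd P = v" "last P = x"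
        using cX v xX unfolding connected_graph_def by blast
      have "x \<notin> C" using Csub by auto
      then have l: "last P \<notin> C" using P(3) by simp
      have h: "hd P \<in> C" using P(2) vC by simp
      obtain a b where ab: "a \<in> C" "b \<notin> C" "b \<in> X" "a \<in> X" "{a, b} \<in> E"
        using cross_edge[OF P(1) h l] by blast
      have bx: "b = x"
      proof (rule ccontr)
        assume "b \<noteq> x"
        have "reach (X - {x}) E v a" using ab(1) unfolding C_def comp_def by simp
        then have "reach (X - {x}) E v b" using reach_step[of "X - {x}" E v a b] ab \<open>b \<noteq> x\<close> by simp
        then show False using ab(2) unfolding C_def comp_def by simp
      qed
      have "reach C E v a" using reach_comp[of "X - {x}" E v a] ab(1) unfolding C_def comp_def by simp
      moreover have "C \<subseteq> X - {x'}" using Csub CK x'K by auto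
      ultimately have "reach (X - {x'}) E v a" by (rule reach_mono)
      then have "reach (X - {x'}) E v x" using reach_step[of "X - {x'}" E v a x] ab(5) bx xX' by simp
      then show False using nr by simp
    qed
  qed
  have "reach (X - {x'}) E a b" if ab: "a \<in> X - {x'}" "b \<in> X - {x'}" for a b
  proof -
    have "reach (X - {x'}) E x b" using reach_sym[OF toX[OF ab(2)]] .
    then show ?thesis using reach_trans[OF toX[OF ab(1)]] by blast
  qed
  then have "connected_graph (X - {x'}) E"
    unfolding conn_def2 using xX' by blast
  then show ?thesis using x'N unfolding N_def by blast
qed


lemma end_nb:
  assumes bnd: "\<forall>P. is_path V E P \<longrightarrow> path_length P \<le> p"
    and P: "is_path V E P" "path_length P = p" and u: "u \<in> V" "u \<notin> set P"
  shows "{hd P, u} \<notin> E" "{last P, u} \<notin> E"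
proof -
  have Pne: "P \<noteq> []" using P(1) path_ne by auto
  have lP: "length P = p + 1" using P(2) Pne by (cases P) (auto simp: path_length_def)
  show "{hd P, u} \<notin> E"
  proof
    assume e: "{hd P, u} \<in> E"
    have "is_path V E ([u] @ P)" using P(1) u e by (intro path_join) (auto simp: insert_commute)
    then have "path_length (u # P) \<le> p" using bnd by simp
    then show False using lP by (simp add: path_length_def)
  qed
  show "{last P, u} \<notin> E"
  proof
    assume e: "{last P, u} \<in> E"
    have "is_path V E (P @ [u])" using P(1) u e by (intro path_join) auto
    then have "path_length (P @ [u]) \<le> p" using bnd by simp
    then show False using lP by (simp add: path_length_def)
  qed
qed

lemma p_ge3:
  assumes bnd: "\<forall>P. is_path V E P \<longrightarrow> path_length P \<le> p"
    and fin: "finite V" and conn: "connected_graph V E" and conn1: "\<forall>v\<in>V. connected_graph (V - {v}) E"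
    and cV: "card V \<ge> 4" and P: "is_path V E P0" "path_length P0 = p"
  shows "p \<ge> 3"
proof (rule ccontr)
  assume "\<not> p \<ge> 3"
  then have lp: "length P0 \<le> 3" using P(2) by (simp add: path_length_def)
  have P0ne: "P0 \<noteq> []" using P(1) path_ne by auto
  have "card (set P0) \<le> 3" using card_length[of P0] lp by linarith
  then have "\<not> V \<subseteq> set P0" using cV card_mono[of "set P0" V] by auto
  then obtain w where w: "w \<in> V" "w \<notin> set P0" by blast
  have h: "hd P0 \<in> V" using path_set[OF P(1)] hd_in_set[OF P0ne] by blast
  obtain Q where Q: "is_path V E Q" "hd Q = hd P0" "last Q = w"
    using conn h w(1) unfolding connected_graph_def by blast
  obtain a b where ab: "a \<in> set P0" "b \<notin> set P0" "b \<in> V" "a \<in> V" "{a, b} \<in> E"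
    using cross_edge[OF Q(1), of "set P0"] Q(2,3) w(2) P0ne by auto
  have ah: "a \<noteq> hd P0" using end_nb(1)[OF bnd P ab(3,2)] ab(5) by auto
  have al: "a \<noteq> last P0" using end_nb(2)[OF bnd P ab(3,2)] ab(5) by auto
  obtain v0 v2 where P3: "P0 = [v0, a, v2]"
  proof -
    have "length P0 \<ge> 1" using P0ne by (cases P0) auto
    then have "length P0 = 1 \<or> length P0 = 2 \<or> length P0 = 3" using lp by linarith
    then consider "length P0 = 1" | "length P0 = 2" | "length P0 = 3" by blast
    then show ?thesis
    proof cases
      case 1 then obtain c where "P0 = [c]" by (cases P0) auto
      then show ?thesis using ab(1) ah by simp
    next
      case 2 then obtain c d where "P0 = [c, d]" by (cases P0; cases "tl P0") auto
      then show ?thesis using ab(1) ah al by auto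
    next
      case 3 then obtain c d f where cdf: "P0 = [c, d, f]" by (cases P0; cases "tl P0"; cases "tl (tl P0)") auto
      then have "a = d" using ab(1) ah al by auto
      then show ?thesis using that cdf by blast
    qed
  qed
  have dP: "distinct [v0, a, v2]" using path_distinct[OF P(1)] P3 by simp
  have aV: "a \<in> V" using ab(4) .
  have "v0 \<in> V - {a}" "b \<in> V - {a}" using path_set[OF P(1)] P3 dP ab by auto
  then obtain Q' where Q': "is_path (V - {a}) E Q'" "hd Q' = v0" "last Q' = b"
    using conn1 aV unfolding connected_graph_def by blast
  obtain c d where cd: "c \<in> {v0, v2}" "d \<notin> {v0, v2}" "d \<in> V - {a}" "{c, d} \<in> E"
    using cross_edge[OF Q'(1), of "{v0, v2}"] Q'(2,3) ab(2) P3 by auto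
  have dn: "d \<notin> set P0" using cd P3 by auto
  have "{hd P0, d} \<notin> E" "{last P0, d} \<notin> E" using end_nb[OF bnd P, of d] cd(3) dn by auto
  then show False using cd(1,4) P3 by auto
qed

lemma cut_sym: assumes XV: "X \<subseteq> V" shows "edge_cut_of V E (V - X) = edge_cut_of V E X"
proof (intro set_eqI iffI)
  fix e assume "e \<in> edge_cut_of V E (V - X)"
  then have "e \<in> E \<and> (\<exists>x y. e = {x, y} \<and> x \<in> V - X \<and> y \<in> V - (V - X))"
    by (simp add: edge_cut_of_def)
  then obtain a b where ab: "e \<in> E" "e = {a, b}" "a \<in> V - X" "b \<in> V - (V - X)" by blast
  have "e = {b, a}" using ab(2) insert_commute[of a b "{}"] by simp
  moreover have "b \<in> X" "a \<in> V - X" using ab(3,4) XV by auto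
  ultimately have "\<exists>x y. e = {x, y} \<and> x \<in> X \<and> y \<in> V - X" by (intro exI[of _ b] exI[of _ a]) simp
  then show "e \<in> edge_cut_of V E X" using ab(1) unfolding edge_cut_of_def by simp
next
  fix e assume "e \<in> edge_cut_of V E X"
  then have "e \<in> E \<and> (\<exists>x y. e = {x, y} \<and> x \<in> X \<and> y \<in> V - X)"
    by (simp add: edge_cut_of_def)
  then obtain a b where ab: "e \<in> E" "e = {a, b}" "a \<in> X" "b \<in> V - X" by blast
  have "e = {b, a}" using ab(2) insert_commute[of a b "{}"] by simp
  moreover have "b \<in> V - X" "a \<in> V - (V - X)" using ab(3,4) XV by auto
  ultimately have "\<exists>x y. e = {x, y} \<and> x \<in> V - X \<and> y \<in> V - (V - X)" by (intro exI[of _ b] exI[of _ a]) simp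
  then show "e \<in> edge_cut_of V E (V - X)" using ab(1) unfolding edge_cut_of_def by simp
qed

lemma path_const: assumes "is_path S E P" "\<forall>u\<in>S. \<forall>v\<in>S. {u, v} \<in> E \<longrightarrow> (u \<in> Z \<longleftrightarrow> v \<in> Z)"
  shows "hd P \<in> Z \<longleftrightarrow> last P \<in> Z"
proof (rule ccontr)
  assume nc: "\<not> (hd P \<in> Z \<longleftrightarrow> last P \<in> Z)"
  have Pne: "P \<noteq> []" using assms(1) path_ne by auto
  have hl: "hd P \<in> set P" "last P \<in> set P" using Pne by auto
  have h1: "\<exists>a\<in>set P. a \<in> Z" and h2: "\<exists>b\<in>set P. b \<notin> Z"
  proof -
    show "\<exists>a\<in>set P. a \<in> Z"
    proof (cases "hd P \<in> Z")
      case True then show ?thesis using hl by blast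
    next
      case False then have "last P \<in> Z" using nc by blast
      then show ?thesis using hl by blast
    qed
    show "\<exists>b\<in>set P. b \<notin> Z"
    proof (cases "hd P \<in> Z")
      case True then have "last P \<notin> Z" using nc by blast
      then show ?thesis using hl by blast
    next
      case False then show ?thesis using hl by blast
    qed
  qed
  obtain i where i: "Suc i < length P" "P!i \<in> Z \<longleftrightarrow> P!Suc i \<notin> Z" using crossing[OF h1 h2] by blast
  have e: "{P!i, P!Suc i} \<in> E" using assms(1) i(1) unfolding is_path_def by blast
  have m: "P!i \<in> S" "P!Suc i \<in> S"
    using path_set[OF assms(1)] nth_mem[of i P] nth_mem[of "Suc i" P] i(1) by auto
  have "P!i \<in> Z \<longleftrightarrow> P!Suc i \<in> Z" using assms(2)[rule_format, OF m e] .
  then show False using i(2) by simp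
qed

lemma bond:
  assumes XV: "X \<subseteq> V" and cX: "connected_graph X E" and cY: "connected_graph (V - X) E"
    and conn: "connected_graph V E"
  shows "is_bond V E (edge_cut_of V E X)"
proof -
  define B where "B = edge_cut_of V E X"
  have ne: "B \<noteq> {}"
  proof -
    obtain x where x: "x \<in> X" using cX unfolding connected_graph_def by blast
    obtain y where y: "y \<in> V - X" using cY unfolding connected_graph_def by blast
    obtain P where P: "is_path V E P" "hd P = x" "last P = y" using conn x y XV unfolding connected_graph_def by blast
    obtain a b where ab: "a \<in> X" "b \<notin> X" "b \<in> V" "a \<in> V" "{a, b} \<in> E"
      using cross_edge[OF P(1), of X] P(2,3) x y by auto
    then have "{a, b} \<in> B" unfolding B_def edge_cut_of_def by blast
    then show ?thesis by auto
  qed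
  have minimal: "F = B" if F: "is_edge_cut V E F" "F \<noteq> {}" "F \<subseteq> B" for F
  proof -
    obtain Z where Z: "Z \<subseteq> V" "F = edge_cut_of V E Z" using F(1) unfolding is_edge_cut_def by blast
    have inner: "u \<in> Z \<longleftrightarrow> v \<in> Z" if uv: "u \<in> V" "v \<in> V" "{u, v} \<in> E" "u \<in> X \<longleftrightarrow> v \<in> X" for u v
    proof (rule ccontr)
      assume "\<not> (u \<in> Z \<longleftrightarrow> v \<in> Z)"
      then have "{u, v} \<in> F" unfolding Z(2) edge_cut_of_def using uv by (auto simp: insert_commute) 
      then have "{u, v} \<in> B" using F(3) by auto
      then obtain a b where "{u, v} = {a, b}" "a \<in> X" "b \<in> V - X" unfolding B_def edge_cut_of_def by blast
      then show False using uv(4) by (auto simp: doubleton_eq_iff)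
    qed
    have constX: "a \<in> Z \<longleftrightarrow> b \<in> Z" if "a \<in> X" "b \<in> X" for a b
    proof -
      have "reach X E a b" using cX that by (simp add: conn_def2)
      then obtain P where P: "is_path X E P" "hd P = a" "last P = b" unfolding reach_def by blast
      have "\<forall>u\<in>X. \<forall>v\<in>X. {u, v} \<in> E \<longrightarrow> (u \<in> Z \<longleftrightarrow> v \<in> Z)"
      proof (intro ballI impI)
        fix u v assume uv: "u \<in> X" "v \<in> X" "{u, v} \<in> E"
        show "u \<in> Z \<longleftrightarrow> v \<in> Z" using inner[of u v] uv XV by auto
      qed
      then show ?thesis using path_const[OF P(1)] P(2,3) by simp
    qed
    have constY: "a \<in> Z \<longleftrightarrow> b \<in> Z" if "a \<in> V - X" "b \<in> V - X" for a b
    proof -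
      have "reach (V - X) E a b" using cY that by (simp add: conn_def2)
      then obtain P where P: "is_path (V - X) E P" "hd P = a" "last P = b" unfolding reach_def by blast
      have "\<forall>u\<in>V - X. \<forall>v\<in>V - X. {u, v} \<in> E \<longrightarrow> (u \<in> Z \<longleftrightarrow> v \<in> Z)"
      proof (intro ballI impI)
        fix u v assume uv: "u \<in> V - X" "v \<in> V - X" "{u, v} \<in> E"
        show "u \<in> Z \<longleftrightarrow> v \<in> Z" using inner[of u v] uv by auto
      qed
      then show ?thesis using path_const[OF P(1)] P(2,3) by simp
    qed
    obtain x0 where x0: "x0 \<in> X" using cX unfolding connected_graph_def by blast
    obtain y0 where y0: "y0 \<in> V - X" using cY unfolding connected_graph_def by blast
    have empty_cut: "edge_cut_of V E V = {}" "edge_cut_of V E {} = {}" unfolding edge_cut_of_def by auto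
    show ?thesis
    proof (cases "x0 \<in> Z")
      case True
      then have XZ: "X \<subseteq> Z" using constX x0 by blast
      show ?thesis
      proof (cases "y0 \<in> Z")
        case True
        then have "V - X \<subseteq> Z" using constY y0 by blast
        then have "Z = V" using XZ Z(1) by auto
        then show ?thesis using F(2) Z(2) empty_cut by simp
      next
        case False
        then have "(V - X) \<inter> Z = {}" using constY y0 by blast
        then have "Z = X" using XZ Z(1) XV by auto
        then show ?thesis using Z(2) B_def by simp
      qed
    next
      case False
      then have XZ: "X \<inter> Z = {}" using constX x0 by blast
      show ?thesis
      proof (cases "y0 \<in> Z")
        case True
        then have "V - X \<subseteq> Z" using constY y0 by blast
        then have "Z = V - X" using XZ Z(1) by auto
        then show ?thesis using Z(2) B_def cut_sym[OF XV] by simp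
      next
        case False
        then have "(V - X) \<inter> Z = {}" using constY y0 by blast
        then have "Z = {}" using XZ Z(1) by auto
        then show ?thesis using F(2) Z(2) empty_cut by simp
      qed
    qed
  qed
  have "is_edge_cut V E B" unfolding is_edge_cut_def B_def using XV by blast
  then show ?thesis unfolding is_bond_def using ne minimal B_def by blast
qed

lemma meets:
  assumes P: "is_path V E P" and a: "a \<in> set P" "a \<in> X" and b: "b \<in> set P" "b \<notin> X"
  shows "path_edges P \<inter> edge_cut_of V E X \<noteq> {}"
proof -
  have h1: "\<exists>a\<in>set P. a \<in> X" using a by blast
  have h2: "\<exists>b\<in>set P. b \<notin> X" using b by blast
  obtain i where i: "Suc i < length P" "P!i \<in> X \<longleftrightarrow> P!Suc i \<notin> X" using crossing[OF h1 h2] by blast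
  have e: "{P!i, P!Suc i} \<in> E" using P i(1) unfolding is_path_def by blast
  have m: "P!i \<in> V" "P!Suc i \<in> V"
    using path_set[OF P] nth_mem[of i P] nth_mem[of "Suc i" P] i(1) by auto
  have pe: "{P!i, P!Suc i} \<in> path_edges P" unfolding path_edges_def using i(1) by blast
  have "{P!i, P!Suc i} \<in> edge_cut_of V E X"
  proof (cases "P!i \<in> X")
    case True then show ?thesis using i(2) e m unfolding edge_cut_of_def by blast
  next
    case False
    have c: "{P!i, P!Suc i} = {P!Suc i, P!i}" by (rule insert_commute)
    have "P!Suc i \<in> X" "P!i \<in> V - X" using False i(2) m by auto
    then show ?thesis using e c unfolding edge_cut_of_def by blast
  qed
  then show ?thesis using pe by blast
qed


theorem corollary1:
  fixes V :: "'a set" and E :: "'a set set" and p :: nat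
  assumes "simple_graph V E"
    and "two_connected V E"
    and "card V \<ge> 4"
    and "\<exists>P. is_path V E P \<and> path_length P = p"
    and "\<forall>P. is_path V E P \<longrightarrow> path_length P \<le> p"
  shows "\<exists>B. is_bond V E B \<and>
           (\<forall>P. is_path V E P \<and> path_length P \<ge> p - 1 \<longrightarrow> path_edges P \<inter> B \<noteq> {})"
proof -
  have fin: "finite V" using assms(1) by (simp add: simple_graph_def)
  have conn: "connected_graph V E" using tc_conn[OF assms(2)] .
  have conn1: "\<forall>v\<in>V. connected_graph (V - {v}) E" using tc_del[OF assms(2)] by blast
  note bnd = assms(5)
  obtain P0 where P0: "is_path V E P0" "path_length P0 = p" using assms(4) by blast
  have p3: "p \<ge> 3" using p_ge3[OF bnd fin conn conn1 assms(3) P0] .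
  define good where "good Y \<longleftrightarrow> Y \<subseteq> V \<and> connected_graph Y E \<and> connected_graph (V - Y) E \<and>
      (\<forall>Q. is_path Y E Q \<longrightarrow> path_length Q < p - 1)" for Y
  obtain w where wV: "w \<in> V" using conn unfolding connected_graph_def by blast
  have good_w: "good {w}"
  proof -
    have c1: "connected_graph {w} E" unfolding conn_def2 using reach_refl[of w "{w}" E] by simp
    have c2: "connected_graph (V - {w}) E" using conn1 wV by blast
    have c3: "path_length Q < p - 1" if Q: "is_path {w} E Q" for Q
    proof -
      have "distinct Q" "set Q \<subseteq> {w}" using path_distinct[OF Q] path_set[OF Q] by auto
      then have "card (set Q) \<le> 1" using card_mono[of "{w}" "set Q"] by simp
      then have "length Q \<le> 1" using \<open>distinct Q\<close> distinct_card by metis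
      then show ?thesis using p3 by (simp add: path_length_def)
    qed
    show ?thesis unfolding good_def using wV c1 c2 c3 by blast
  qed
  obtain Y where Y: "good Y" and Ymax: "\<forall>Z. good Z \<longrightarrow> card V - card Y \<le> card V - card Z"
    using ex_has_least_nat[of good "{w}" "\<lambda>Z. card V - card Z"] good_w by metis
  have YV: "Y \<subseteq> V" and cY: "connected_graph Y E" and cX: "connected_graph (V - Y) E"
    and noY: "\<forall>Q. is_path Y E Q \<longrightarrow> path_length Q < p - 1" using Y unfolding good_def by auto
  define X where "X = V - Y"
  have XV: "X \<subseteq> V" unfolding X_def by auto
  have VX: "V - X = Y" unfolding X_def using YV by auto
  have noX: "path_length R < p - 1" if R: "is_path X E R" for R
  proof (rule ccontr)
    assume "\<not> path_length R < p - 1"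
    then have lR: "path_length R \<ge> p - 1" by simp
    have RV: "is_path V E R" using R XV path_mono by blast
    have lenR: "length R \<ge> 3" using lR p3 by (simp add: path_length_def)
    have X2: "\<exists>a\<in>X. \<exists>b\<in>X. a \<noteq> b"
    proof -
      have "R ! 0 \<noteq> R ! 1" using nth_eq_iff_index_eq[OF path_distinct[OF R], of 0 1] lenR path_ne[OF R] by simp
      moreover have m0: "R ! 0 \<in> set R" using lenR by (intro nth_mem) linarith
      moreover have m1: "R ! 1 \<in> set R" using lenR by (intro nth_mem) linarith
      moreover have "R ! 0 \<in> X" "R ! 1 \<in> X" using path_set[OF R] m0 m1 by auto
      ultimately show ?thesis by blast
    qed
    have Yne: "V - X \<noteq> {}" using VX cY unfolding connected_graph_def by simp
    have ex: "\<exists>x0\<in>X. \<exists>y0\<in>V - X. {x0, y0} \<in> E"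
    proof -
      obtain a where a: "a \<in> X" using X2 by blast
      obtain b where b: "b \<in> V - X" using Yne by blast
      obtain P where P: "is_path V E P" "hd P = a" "last P = b" using conn a b XV unfolding connected_graph_def by blast
      obtain u v where uv: "u \<in> X" "v \<notin> X" "v \<in> V" "u \<in> V" "{u, v} \<in> E"
        using cross_edge[OF P(1), of X] P(2,3) a b by auto
      then show ?thesis by blast
    qed
    obtain x y where xy: "x \<in> X" "y \<in> V - X" "{x, y} \<in> E" and cX': "connected_graph (X - {x}) E"
      using candidate[OF fin conn1 XV cX[folded X_def] Yne ex X2] by blast
    define Y' where "Y' = insert x Y"
    have yY: "y \<in> Y" using xy(2) VX by simp
    have cY': "connected_graph Y' E" unfolding Y'_def using conn_insert[OF cY yY xy(3)] .
    have VY': "V - Y' = X - {x}" unfolding Y'_def X_def by auto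
    have Y'V: "Y' \<subseteq> V" unfolding Y'_def using xy(1) XV YV by auto
    have xY: "x \<notin> Y" using xy(1) X_def by auto
    have finY: "finite Y" using finite_subset[OF YV fin] .
    have cardY': "card Y' = card Y + 1" unfolding Y'_def using xY finY by simp
    have cardY'V: "card Y' \<le> card V" using card_mono[OF fin Y'V] .
    have "\<not> good Y'"
    proof
      assume "good Y'"
      then have "card V - card Y \<le> card V - card Y'" using Ymax by blast
      then show False using cardY' cardY'V by simp
    qed
    then obtain Q where Q: "is_path Y' E Q" "path_length Q \<ge> p - 1"
      unfolding good_def using Y'V cY' cX' VY' by (auto simp: not_less)
    have QV: "is_path V E Q" using Q(1) Y'V path_mono by blast
    have RQ: "set R \<inter> set Q \<subseteq> {x}"
      using path_set[OF R] path_set[OF Q(1)] unfolding Y'_def X_def by auto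
    show False
    proof (cases "x \<in> set R \<inter> set Q")
      case True
      then have "set R \<inter> set Q = {x}" using RQ by blast
      then show False using lemmaS[OF bnd conn1 p3 RV lR QV Q(2)] by blast
    next
      case False
      then have "set R \<inter> set Q = {}" using RQ by blast
      then show False using lemmaA[OF bnd conn conn1 _ RV lR QV Q(2)] p3 by simp
    qed
  qed
  have cXX: "connected_graph X E" using cX unfolding X_def .
  have cVX: "connected_graph (V - X) E" using cY VX by simp
  have bond_B: "is_bond V E (edge_cut_of V E X)" using bond[OF XV cXX cVX conn] .
  have meet: "path_edges P \<inter> edge_cut_of V E X \<noteq> {}"
    if P: "is_path V E P" "path_length P \<ge> p - 1" for P
  proof -
    have "\<not> set P \<subseteq> X"
    proof
      assume "set P \<subseteq> X"
      then have "is_path X E P" by (rule path_restrict[OF P(1)])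
      then show False using noX P(2) by fastforce
    qed
    then obtain b where b: "b \<in> set P" "b \<notin> X" by blast
    have "\<not> set P \<subseteq> Y"
    proof
      assume "set P \<subseteq> Y"
      then have "is_path Y E P" by (rule path_restrict[OF P(1)])
      then show False using noY P(2) by fastforce
    qed
    then obtain a where a: "a \<in> set P" "a \<notin> Y" by blast
    have "a \<in> X" using a path_set[OF P(1)] unfolding X_def by auto
    then show ?thesis using meets[OF P(1) a(1) _ b] by blast
  qed
  show ?thesis using bond_B meet by blast
qed

end
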